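(* Let $n \ge 2$ and let $\Omega \subset \mathbb{R}^n$ be an unbounded domain. Let $r_* > 0$ be such that $S_r \cap \Omega \neq \emptyset$ for all $r > r_*$, where $S_r$ is the sphere of radius $r$ centered at the origin. Let $c : (0,\infty) \to (0,\infty)$ be a positive non-increasing function and let $\lambda > 3$ be such that $$\int_{r_*}^\infty r^\lambda c(r)\,dr = \infty.$$ Then every non-negative (viscosity) solution $u$ of the problem $$\Delta_\infty u \ge c(|x|)\, u^\lambda \ \text{in } \Omega, \qquad u|_{\partial\Omega} = 0$$ is identically zero.
   Context: The $\infty$-Laplacian is $\Delta_\infty u = \sum_{i,j=1}^n \frac{\partial^2 u}{\partial x_i \partial x_j}\frac{\partial u}{\partial x_i}\frac{\partial u}{\partial x_j}$. For $u:\Omega \to \mathbb{R}$ and $x \in \Omega$, the second-order superjet $J^{2,+}_\Omega u(x)$ is the set of pairs $(v,A)$ with $v \in \mathbb{R}^n$ and $A$ a symmetric $n\times n$ matrix such that $u(y) - u(x) \le \langle v, y-x\rangle + \frac12 \langle A(y-x), y-x\rangle + o(|y-x|^2)$ for all $y$ in some neighborhood of $x$. A function $u \ge 0$ on $\overline{\Omega}$ is a non-negative solution of the problem if $u$ is upper semicontinuous on $\overline{\Omega}$, $u = 0$ on $\partial\Omega$, and for every $x \in \Omega$ with $J^{2,+}_\Omega u(x) \ne \emptyset$ one has $\langle Av, v\rangle \ge c(|x|)u(x)^\lambda$ for all $(v,A) \in J^{2,+}_\Omega u(x)$. If $\Omega = \mathbb{R}^n$, the boundary condition is void. *)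

theory Defs
  imports "HOL-Analysis.Analysis"
begin

definition usc_on :: "('a::metric_space) set \<Rightarrow> ('a \<Rightarrow> real) \<Rightarrow> bool" where
  "usc_on S u \<longleftrightarrow> (\<forall>x\<in>S. \<forall>e>0. \<exists>d>0. \<forall>y\<in>S. dist y x < d \<longrightarrow> u y < u x + e)"

definition superjet2 ::
  "(real^'n) set \<Rightarrow> (real^'n \<Rightarrow> real) \<Rightarrow> real^'n \<Rightarrow> ((real^'n) \<times> (real^'n^'n)) set" where
  "superjet2 \<Omega> u x = {(v, A). transpose A = A \<and>
     (\<forall>e>0. \<exists>d>0. \<forall>y\<in>\<Omega>. norm (y - x) < d \<longrightarrow>
        u y - u x \<le> v \<bullet> (y - x) + (1/2) * ((A *v (y - x)) \<bullet> (y - x)) + e * (norm (y - x))\<^sup>2)}"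

text \<open>Non-negative (viscosity) solution of Delta_infty u \<ge> c(|x|) u^lambda in Omega, u = 0 on the boundary.\<close>
definition nonneg_solution ::
  "(real^'n) set \<Rightarrow> (real \<Rightarrow> real) \<Rightarrow> real \<Rightarrow> (real^'n \<Rightarrow> real) \<Rightarrow> bool" where
  "nonneg_solution \<Omega> c lam u \<longleftrightarrow>
     (\<forall>x\<in>closure \<Omega>. u x \<ge> 0) \<and>
     usc_on (closure \<Omega>) u \<and>
     (\<forall>x\<in>frontier \<Omega>. u x = 0) \<and>
     (\<forall>x\<in>\<Omega>. \<forall>(v, A)\<in>superjet2 \<Omega> u x. (A *v v) \<bullet> v \<ge> c (norm x) * (u x) powr lam)"

end

theory Submission
  imports Defs
begin

lemma usc_seq_helper:
  fixes f :: "'a::metric_space \<Rightarrow> real"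
  fixes x :: "nat \<Rightarrow> 'a"
  assumes "compact S" "usc_on S f" "\<forall>k. x k \<in> S"
  shows "\<exists>y\<in>S. \<forall>e>0. \<forall>N::nat. \<exists>k\<ge>N. f (x k) < f y + e"
proof -
  obtain y r where y: "y \<in> S" and r: "strict_mono r" and lim: "(x \<circ> r) \<longlonglongrightarrow> y"
    using seq_compactE[OF compact_imp_seq_compact[OF assms(1)] assms(3)] by blast
  show ?thesis
  proof (intro bexI[OF _ y] allI impI)
    fix e :: real and N assume e: "e > 0"
    obtain d where d: "d > 0" "\<forall>z\<in>S. dist z y < d \<longrightarrow> f z < f y + e"
      using assms(2) y e unfolding usc_on_def by blast
    have "eventually (\<lambda>k. dist ((x \<circ> r) k) y < d) sequentially"
      using lim d(1) by (simp add: tendsto_iff)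
    then obtain K where K: "\<forall>k\<ge>K. dist (x (r k)) y < d"
      by (auto simp: eventually_sequentially)
    have "dist (x (r (max K N))) y < d" using K by simp
    hence "f (x (r (max K N))) < f y + e" using d(2) assms(3) by blast
    moreover have "r (max K N) \<ge> N" using seq_suble[OF r, of "max K N"] by simp
    ultimately show "\<exists>k\<ge>N. f (x k) < f y + e" by blast
  qed
qed

lemma usc_max:
  fixes f :: "'a::metric_space \<Rightarrow> real"
  assumes "compact S" "S \<noteq> {}" "usc_on S f"
  shows "\<exists>y\<in>S. \<forall>x\<in>S. f x \<le> f y"
proof -
  have bdd: "\<exists>B. \<forall>x\<in>S. f x \<le> B"
  proof (rule ccontr)
    assume "\<not> ?thesis"
    hence "\<forall>k::nat. \<exists>z. z \<in> S \<and> f z > real k" by (simp add: not_le) blast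
    then obtain x where x: "\<forall>k. x k \<in> S \<and> f (x k) > real k" by (rule choice[THEN exE]) blast
    obtain y where y: "y \<in> S" "\<forall>e>0. \<forall>N. \<exists>k\<ge>N. f (x k) < f y + e"
      using usc_seq_helper[OF assms(1,3), of x] x by blast
    obtain k where k: "k \<ge> nat \<lceil>f y + 1\<rceil>" "f (x k) < f y + 1" using y(2) zero_less_one by blast
    have "real k \<ge> f y + 1" using k(1) by linarith
    moreover have "f (x k) > real k" using x by blast
    ultimately show False using k(2) by linarith
  qed
  then obtain B where B: "\<forall>x\<in>S. f x \<le> B" by blast
  define s where "s = Sup (f ` S)"
  have bddf: "bdd_above (f ` S)" using B by (auto intro: bdd_aboveI)
  have le_s: "\<forall>x\<in>S. f x \<le> s" unfolding s_def using bddf by (simp add: cSup_upper)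
  show ?thesis
  proof (rule ccontr)
    assume "\<not> ?thesis"
    hence lt: "\<forall>y\<in>S. f y < s" using le_s by (auto simp: not_le order.order_iff_strict)
    have "\<forall>k::nat. \<exists>z. z \<in> S \<and> f z > s - 1 / (real k + 1)"
    proof
      fix k :: nat
      have "s - 1 / (real k + 1) < s" by simp
      then obtain w where "w \<in> f ` S" "s - 1 / (real k + 1) < w"
        using less_cSupD[of "f ` S"] assms(2) unfolding s_def by blast
      thus "\<exists>z. z \<in> S \<and> f z > s - 1 / (real k + 1)" by blast
    qed
    then obtain x where x: "\<forall>k. x k \<in> S \<and> f (x k) > s - 1 / (real k + 1)" by (rule choice[THEN exE]) blast
    obtain y where y: "y \<in> S" "\<forall>e>0. \<forall>N. \<exists>k\<ge>N. f (x k) < f y + e"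
      using usc_seq_helper[OF assms(1,3), of x] x by blast
    define e where "e = (s - f y) / 2"
    have e: "e > 0" using lt y(1) unfolding e_def by simp
    obtain N :: nat where N0: "inverse (real (Suc N)) < e"
      using reals_Archimedean[OF e] by blast
    have N: "1 / (real N + 1) < e" using N0 by (simp add: inverse_eq_divide add.commute)
    obtain k where k: "k \<ge> N" "f (x k) < f y + e" using y(2) e by blast
    have "1 / (real k + 1) \<le> 1 / (real N + 1)" using k(1) by (simp add: frac_le)
    moreover have "s - 1 / (real k + 1) < f (x k)" using x by blast
    ultimately show False using k(2) N unfolding e_def by argo
  qed
qed

lemma taylor2_upper:
  fixes f f1 f2 :: "real \<Rightarrow> real"
  assumes d1: "\<forall>t\<in>{a<..<b}. (f has_real_derivative f1 t) (at t)"
    and d2: "\<forall>t\<in>{a<..<b}. (f1 has_real_derivative f2 t) (at t)"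
    and c2: "isCont f2 s" and s: "a < s" "s < b" and e: "e > 0"
  shows "\<exists>d>0. \<forall>x. \<bar>x - s\<bar> < d \<longrightarrow> f x \<le> f s + f1 s * (x - s) + (f2 s / 2) * (x - s)^2 + e * (x - s)^2"
proof -
  have "2 * e > 0" using e by simp
  then obtain d1 where d1p: "d1 > 0" and d1c': "\<forall>t. t \<noteq> s \<and> \<bar>t - s\<bar> < d1 \<longrightarrow> \<bar>f2 t - f2 s\<bar> < 2 * e"
    using c2 unfolding isCont_def LIM_def dist_real_def by blast
  have d1c: "\<forall>t. \<bar>t - s\<bar> < d1 \<longrightarrow> \<bar>f2 t - f2 s\<bar> < 2 * e"
    using d1c' e by (metis abs_zero cancel_comm_monoid_add_class.diff_cancel mult_pos_pos zero_less_numeral)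
  define d where "d = min d1 (min (s - a) (b - s))"
  have dp: "d > 0" using d1p s unfolding d_def by simp
  show ?thesis
  proof (intro exI[of _ d] conjI allI impI dp)
    fix x assume xs: "\<bar>x - s\<bar> < d"
    show "f x \<le> f s + f1 s * (x - s) + (f2 s / 2) * (x - s)^2 + e * (x - s)^2"
    proof (cases "x = s")
      case True thus ?thesis by simp
    next
      case False
      define diff where "diff = (\<lambda>m::nat. if m = 0 then f else if m = 1 then f1 else f2)"
      have D: "\<forall>m t. m < 2 \<and> min x s \<le> t \<and> t \<le> max x s \<longrightarrow> DERIV (diff m) t :> diff (Suc m) t"
      proof (intro allI impI)
        fix m t assume mt: "m < (2::nat) \<and> min x s \<le> t \<and> t \<le> max x s"
        have tI: "t \<in> {a<..<b}" using mt xs unfolding d_def by (auto simp: abs_if split: if_splits)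
        show "DERIV (diff m) t :> diff (Suc m) t"
        proof (cases "m = 0")
          case True thus ?thesis using d1 tI unfolding diff_def by simp
        next
          case False hence "m = 1" using mt by simp
          thus ?thesis using d2 tI unfolding diff_def by simp
        qed
      qed
      have ex: "\<exists>t. (if x < s then x < t \<and> t < s else s < t \<and> t < x) \<and>
         f x = (\<Sum>m<2. (diff m s / fact m) * (x - s)^m) + (diff 2 t / fact 2) * (x - s)^2"
        apply (rule Taylor[of 2 diff f "min x s" "max x s" s x])
        using D False by (auto simp: diff_def)
      then obtain t where t: "(if x < s then x < t \<and> t < s else s < t \<and> t < x)"
        and fx: "f x = (\<Sum>m<2. (diff m s / fact m) * (x - s)^m) + (diff 2 t / fact 2) * (x - s)^2"
        by blast
      have fx': "f x = f s + f1 s * (x - s) + (f2 t / 2) * (x - s)^2"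
        using fx unfolding diff_def by (simp add: eval_nat_numeral)
      have "\<bar>t - s\<bar> < d1" using t xs unfolding d_def by (auto split: if_splits)
      hence "f2 t \<le> f2 s + 2 * e" using d1c by fastforce
      hence "(f2 t / 2) * (x - s)^2 \<le> (f2 s / 2 + e) * (x - s)^2"
        by (intro mult_right_mono) auto
      thus ?thesis using fx' by (simp add: algebra_simps)
    qed
  qed
qed

definition jmat :: "real \<Rightarrow> real \<Rightarrow> real^'n \<Rightarrow> real^'n^'n" where
  "jmat a b z = (\<chi> i j. (if i = j then a else 0) + b * (z$i * z$j))"

lemma jmat_mult: "jmat a b z *v h = a *\<^sub>R h + (b * (z \<bullet> h)) *\<^sub>R z"
proof -
  have "\<And>i. (\<Sum>j\<in>UNIV. ((if i = j then a else 0) + b * (z$i * z$j)) * h$j) = a * h$i + b * (z \<bullet> h) * z$i"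
  proof -
    fix i
    have "(\<Sum>j\<in>UNIV. ((if i = j then a else 0) + b * (z$i * z$j)) * h$j)
        = (\<Sum>j\<in>UNIV. (if i = j then a else 0) * h$j) + (\<Sum>j\<in>UNIV. b * z$i * (z$j * h$j))"
      by (simp add: sum.distrib distrib_right mult.assoc)
    also have "\<dots> = a * h$i + b * z$i * (\<Sum>j\<in>UNIV. z$j * h$j)"
    proof -
      have "(\<Sum>j\<in>UNIV. (if i = j then a else 0) * h$j) = (\<Sum>j\<in>UNIV. if i = j then a * h$j else 0)"
        by (rule sum.cong) auto
      also have "\<dots> = a * h$i" by (rule trans[OF sum.delta']) auto
      finally have "(\<Sum>j\<in>UNIV. (if i = j then a else 0) * h$j) = a * h$i" .
      thus ?thesis by (simp add: sum_distrib_left)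
    qed
    also have "\<dots> = a * h$i + b * (z \<bullet> h) * z$i" by (simp add: inner_vec_def)
    finally show "?thesis i" .
  qed
  thus ?thesis by (simp add: jmat_def matrix_vector_mult_def vec_eq_iff)
qed

lemma jmat_sym: "transpose (jmat a b z) = jmat a b z"
  by (simp add: jmat_def transpose_def vec_eq_iff mult.commute eq_commute)

lemma jmat_quad: "(jmat a b z *v h) \<bullet> h = a * (norm h)^2 + b * (z \<bullet> h)^2"
proof -
  have "(jmat a b z *v h) \<bullet> h = a * (h \<bullet> h) + b * (z \<bullet> h) * (z \<bullet> h)"
    by (simp add: jmat_mult inner_add_left)
  thus ?thesis by (simp add: dot_square_norm power2_eq_square)
qed

lemma jmat_quad_z: "(jmat a b z *v (t *\<^sub>R z)) \<bullet> (t *\<^sub>R z) = t^2 * (a * (norm z)^2 + b * (norm z)^4)"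
proof -
  have zz: "z \<bullet> z = (norm z)^2" by (simp add: dot_square_norm)
  have "(z \<bullet> (t *\<^sub>R z))^2 = t^2 * (norm z)^4"
    by (simp add: zz power_mult_distrib flip: power_mult)
  moreover have "(norm (t *\<^sub>R z))^2 = t^2 * (norm z)^2" by (simp add: power_mult_distrib)
  ultimately have "(jmat a b z *v (t *\<^sub>R z)) \<bullet> (t *\<^sub>R z) = a * (t^2 * (norm z)^2) + b * (t^2 * (norm z)^4)"
    by (simp only: jmat_quad)
  thus ?thesis by (simp add: algebra_simps)
qed

definition jet :: "(real^'n \<Rightarrow> real) \<Rightarrow> real^'n \<Rightarrow> real^'n \<Rightarrow> real^'n^'n \<Rightarrow> bool" where
  "jet F z v A \<longleftrightarrow> (\<forall>e>0. \<exists>d>0. \<forall>y. norm (y - z) < d \<longrightarrow>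
      F y - F z \<le> v \<bullet> (y - z) + (1/2) * ((A *v (y - z)) \<bullet> (y - z)) + e * (norm (y - z))\<^sup>2)"

lemma jet_superjet:
  assumes "jet F z v A" "transpose A = A" "d0 > 0"
    "\<forall>y\<in>\<Omega>. norm (y - z) < d0 \<longrightarrow> u y - u z \<le> F y - F z"
  shows "(v, A) \<in> superjet2 \<Omega> u z"
proof -
  have "\<forall>e>0. \<exists>d>0. \<forall>y\<in>\<Omega>. norm (y - z) < d \<longrightarrow>
      u y - u z \<le> v \<bullet> (y - z) + (1/2) * ((A *v (y - z)) \<bullet> (y - z)) + e * (norm (y - z))\<^sup>2"
  proof (intro allI impI)
  fix e :: real assume e: "e > 0"
  obtain d where d: "d > 0" "\<forall>y. norm (y - z) < d \<longrightarrow>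
      F y - F z \<le> v \<bullet> (y - z) + (1/2) * ((A *v (y - z)) \<bullet> (y - z)) + e * (norm (y - z))\<^sup>2"
    using assms(1) e unfolding jet_def by blast
  show "\<exists>d>0. \<forall>y\<in>\<Omega>. norm (y - z) < d \<longrightarrow>
      u y - u z \<le> v \<bullet> (y - z) + (1/2) * ((A *v (y - z)) \<bullet> (y - z)) + e * (norm (y - z))\<^sup>2"
  proof (intro exI[of _ "min d d0"] conjI ballI impI)
    show "min d d0 > 0" using d(1) assms(3) by simp
  next
    fix y assume "y \<in> \<Omega>" "norm (y - z) < min d d0"
    thus "u y - u z \<le> v \<bullet> (y - z) + (1/2) * ((A *v (y - z)) \<bullet> (y - z)) + e * (norm (y - z))\<^sup>2"
      using d(2) assms(4) by force
  qed
  qed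
  thus ?thesis unfolding superjet2_def using assms(2) by blast
qed

lemma norm_add_sq: "(norm (z + h))^2 = (norm z)^2 + 2 * (z \<bullet> h) + (norm h)^2"
  for z h :: "'a::real_inner"
  by (simp add: dot_square_norm[symmetric] inner_add_left inner_add_right inner_commute)

lemma rad_jet:
  fixes W W1 W2 :: "real \<Rightarrow> real" and z :: "real^'n"
  assumes ab: "0 < a" "a < norm z" "norm z < b"
    and d1: "\<forall>t\<in>{a<..<b}. (W has_real_derivative W1 t) (at t)"
    and d2: "\<forall>t\<in>{a<..<b}. (W1 has_real_derivative W2 t) (at t)"
    and c2: "continuous_on {a<..<b} W2"
  shows "jet (\<lambda>x. W (norm x)) z ((W1 (norm z) / norm z) *\<^sub>R z)
           (jmat (W1 (norm z) / norm z) ((W2 (norm z) - W1 (norm z) / norm z) / (norm z)^2) z)"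
proof -
  define r where "r = norm z"
  define s where "s = r^2"
  have rpos: "r > 0" using ab unfolding r_def by linarith
  define G where "G = (\<lambda>\<sigma>. W (sqrt \<sigma>))"
  define G1 where "G1 = (\<lambda>\<sigma>. W1 (sqrt \<sigma>) * inverse (2 * sqrt \<sigma>))"
  define G2 where "G2 = (\<lambda>\<sigma>. W2 (sqrt \<sigma>) / (4 * (sqrt \<sigma>)^2) - W1 (sqrt \<sigma>) / (4 * (sqrt \<sigma>)^3))"
  have sI: "sqrt \<sigma> \<in> {a<..<b}" "\<sigma> > 0" if "\<sigma> \<in> {a^2<..<b^2}" for \<sigma>
  proof -
    have "a^2 < \<sigma>" "\<sigma> < b^2" using that by auto
    have "a < sqrt \<sigma>" using real_less_rsqrt[OF \<open>a^2 < \<sigma>\<close>] .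
    moreover have "sqrt \<sigma> < \<bar>b\<bar>" using real_sqrt_less_mono[OF \<open>\<sigma> < b^2\<close>] by simp
    moreover have "0 < b" using ab by simp
    ultimately show "sqrt \<sigma> \<in> {a<..<b}" by simp
    have "0 < a^2" using ab(1) by simp
    thus "\<sigma> > 0" using \<open>a^2 < \<sigma>\<close> by linarith
  qed
  have dG: "\<forall>\<sigma>\<in>{a^2<..<b^2}. (G has_real_derivative G1 \<sigma>) (at \<sigma>)"
  proof
    fix \<sigma> assume h: "\<sigma> \<in> {a^2<..<b^2}"
    have "(G has_real_derivative W1 (sqrt \<sigma>) * (inverse (sqrt \<sigma>) / 2)) (at \<sigma>)"
      unfolding G_def using d1 sI[OF h] by (intro DERIV_chain2[of W] DERIV_real_sqrt) auto
    thus "(G has_real_derivative G1 \<sigma>) (at \<sigma>)"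
      by (rule DERIV_cong) (simp add: G1_def field_simps)
  qed
  have dG1: "\<forall>\<sigma>\<in>{a^2<..<b^2}. (G1 has_real_derivative G2 \<sigma>) (at \<sigma>)"
  proof
    fix \<sigma> assume h: "\<sigma> \<in> {a^2<..<b^2}"
    have sp: "sqrt \<sigma> > 0" "\<sigma> > 0" using sI[OF h] ab(1) by auto
    have A: "((\<lambda>\<sigma>. W1 (sqrt \<sigma>)) has_real_derivative W2 (sqrt \<sigma>) * (inverse (sqrt \<sigma>) / 2)) (at \<sigma>)"
      using d2 sI[OF h] by (intro DERIV_chain2[of W1] DERIV_real_sqrt) auto
    have B: "((\<lambda>\<sigma>. inverse (2 * sqrt \<sigma>)) has_real_derivative
        - ((2 * (inverse (sqrt \<sigma>) / 2)) * inverse ((2 * sqrt \<sigma>) ^ Suc (Suc 0)))) (at \<sigma>)"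
      using sp by (intro DERIV_inverse_fun DERIV_cmult DERIV_real_sqrt) auto
    have "(G1 has_real_derivative (W2 (sqrt \<sigma>) * (inverse (sqrt \<sigma>) / 2)) * inverse (2 * sqrt \<sigma>)
          + (- ((2 * (inverse (sqrt \<sigma>) / 2)) * inverse ((2 * sqrt \<sigma>) ^ Suc (Suc 0))))
            * W1 (sqrt \<sigma>)) (at \<sigma>)"
      unfolding G1_def by (rule DERIV_mult[OF A B])
    note D1 = this
    have Q: "\<forall>t>0. W2 t * (inverse t / 2) * inverse (2 * t) + (- ((2 * (inverse t / 2)) * inverse ((2 * t) ^ Suc (Suc 0)))) * W1 t
        = W2 t / (4 * t^2) - W1 t / (4 * t^3)"
      by (simp add: field_simps power2_eq_square power3_eq_cube)
    show "(G1 has_real_derivative G2 \<sigma>) (at \<sigma>)"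
      unfolding G2_def by (rule DERIV_cong[OF D1 Q[rule_format, OF sp(1)]])
  qed
  have sr: "sqrt s = r" using rpos unfolding s_def by simp
  have sin: "s \<in> {a^2<..<b^2}" using ab rpos unfolding s_def r_def
    by (auto intro!: power_strict_mono)
  have cG2: "isCont G2 s"
  proof -
    have "isCont W2 r" using c2 ab unfolding r_def
      by (simp add: continuous_on_eq_continuous_at)
    hence c1: "isCont (\<lambda>\<sigma>. W2 (sqrt \<sigma>)) s"
      using isCont_o2[OF isCont_real_sqrt[of s], where g = W2] sr by simp
    have "isCont W1 r" using d2 ab unfolding r_def by (auto intro: DERIV_isCont)
    hence c3: "isCont (\<lambda>\<sigma>. W1 (sqrt \<sigma>)) s"
      using isCont_o2[OF isCont_real_sqrt[of s], where g = W1] sr by simp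
    have "s > 0" using rpos unfolding s_def by simp
    thus ?thesis unfolding G2_def using c1 c3 rpos
      by (intro continuous_intros) (auto simp: sr)
  qed
  have G1s: "G1 s = W1 r / (2 * r)" unfolding G1_def sr by (simp add: field_simps)
  define B where "B = (W2 r - W1 r / r) / r^2"
  have G2s: "G2 s = B / 4" unfolding G2_def B_def sr using rpos
    by (simp add: field_simps power2_eq_square power3_eq_cube)
  show ?thesis
    unfolding jet_def r_def[symmetric] B_def[symmetric]
  proof (intro allI impI)
    fix e :: real assume e: "e > 0"
    define e' where "e' = e / (2 * (2*r+1)^2)"
    have e': "e' > 0" using e rpos unfolding e'_def by simp
    obtain dT where dT: "dT > 0" "\<forall>x. \<bar>x - s\<bar> < dT \<longrightarrow> G x \<le> G s + G1 s * (x - s) + (G2 s / 2) * (x - s)^2 + e' * (x - s)^2"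
      using taylor2_upper[OF dG dG1 cG2 _ _ e'] sin by auto
    define d where "d = min 1 (min (dT / (2*r+1)) (4*e / (\<bar>B\<bar> * (4*r+1) + 1)))"
    have "\<bar>B\<bar> * (4*r+1) \<ge> 0" using rpos by simp
    hence "\<bar>B\<bar> * (4*r+1) + 1 > 0" by linarith
    hence dpos: "d > 0" unfolding d_def using dT rpos e by simp
    show "\<exists>d>0. \<forall>y. norm (y - z) < d \<longrightarrow>
        W (norm y) - W r \<le> (W1 r / r) *\<^sub>R z \<bullet> (y - z) + 1 / 2 * ((jmat (W1 r / r) B z *v (y - z)) \<bullet> (y - z)) + e * (norm (y - z))\<^sup>2"
    proof (intro exI[of _ d] conjI allI impI dpos)
      fix y assume yd: "norm (y - z) < d"
      define h where "h = y - z"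
      define n where "n = norm h"
      define p where "p = z \<bullet> h"
      define q where "q = n^2"
      have n0: "n \<ge> 0" unfolding n_def by simp
      have n1: "n \<le> 1" "n < dT / (2*r+1)" "n < 4*e / (\<bar>B\<bar> * (4*r+1) + 1)"
        using yd unfolding n_def h_def d_def by auto
      have pbound: "\<bar>p\<bar> \<le> r * n" unfolding p_def r_def n_def by (rule Cauchy_Schwarz_ineq2)
      have yz: "y = z + h" unfolding h_def by simp
      have ny: "(norm y)^2 = s + (2*p + q)"
        unfolding yz norm_add_sq s_def r_def p_def q_def n_def by simp
      have qn: "q \<le> n" unfolding q_def using n0 n1(1) by (simp add: power2_eq_square mult_left_le_one_le)
      have dabs: "\<bar>2*p + q\<bar> \<le> (2*r+1) * n"
      proof -
        have "\<bar>2*p + q\<bar> \<le> \<bar>2*p\<bar> + \<bar>q\<bar>" by (rule abs_triangle_ineq)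
        hence "\<bar>2*p + q\<bar> \<le> 2 * \<bar>p\<bar> + q" unfolding q_def by simp
        thus ?thesis using pbound qn by (simp add: algebra_simps)
      qed
      have "(2*r+1) * n < dT" using n1(2) rpos by (simp add: field_simps)
      hence dlt: "\<bar>(norm y)^2 - s\<bar> < dT" using dabs ny by simp
      have Wy: "W (norm y) = G ((norm y)^2)" unfolding G_def by simp
      have Wz: "W r = G s" unfolding G_def sr ..
      have T: "W (norm y) - W r \<le> G1 s * (2*p+q) + (G2 s / 2) * (2*p+q)^2 + e' * (2*p+q)^2"
        using dT(2)[rule_format, OF dlt] Wy Wz ny by simp
      have sq: "(2*p+q)^2 \<le> (2*r+1)^2 * q"
      proof -
        have "(2*p+q)^2 = \<bar>2*p+q\<bar>^2" by simp
        also have "\<dots> \<le> ((2*r+1) * n)^2" using dabs by (intro power_mono) auto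
        finally show ?thesis unfolding q_def by (simp add: power_mult_distrib)
      qed
      have e'part: "e' * (2*p+q)^2 \<le> (e/2) * q"
      proof -
        have "e' * (2*p+q)^2 \<le> e' * ((2*r+1)^2 * q)" using sq e' by (intro mult_left_mono) auto
        also have "\<dots> = (e/2) * q" unfolding e'_def using rpos by (simp add: field_simps)
        finally show ?thesis .
      qed
      have Bpart: "\<bar>(B/8) * (4*p*q + q^2)\<bar> \<le> (e/2) * q"
      proof -
        have "\<bar>4*p*q + q^2\<bar> \<le> \<bar>4*p*q\<bar> + \<bar>q^2\<bar>" by (rule abs_triangle_ineq)
        hence "\<bar>4*p*q + q^2\<bar> \<le> 4*\<bar>p\<bar>*q + q^2" using n0 unfolding q_def
          by (simp add: abs_mult)
        also have "\<dots> \<le> 4*(r*n)*q + n*q"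
        proof (rule add_mono)
          have q0: "q \<ge> 0" unfolding q_def by simp
          show "4*\<bar>p\<bar>*q \<le> 4*(r*n)*q" using pbound q0 by (intro mult_right_mono) auto
          show "q^2 \<le> n*q" using qn q0 unfolding power2_eq_square by (rule mult_right_mono)
        qed
        also have "\<dots> = (4*r+1) * n * q" by (simp add: algebra_simps)
        finally have X: "\<bar>4*p*q + q^2\<bar> \<le> (4*r+1) * n * q" .
        have "\<bar>(B/8) * (4*p*q + q^2)\<bar> = (\<bar>B\<bar>/8) * \<bar>4*p*q + q^2\<bar>" by (simp add: abs_mult)
        also have "\<dots> \<le> (\<bar>B\<bar>/8) * ((4*r+1) * n * q)" using X by (intro mult_left_mono) auto
        also have "\<dots> = (\<bar>B\<bar> * (4*r+1) * n) * q / 8" by simp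
        also have "\<dots> \<le> (4*e) * q / 8"
        proof -
          have "\<bar>B\<bar> * (4*r+1) * n \<le> (\<bar>B\<bar> * (4*r+1) + 1) * n" using n0 by (simp add: algebra_simps)
          also have "\<dots> \<le> 4*e" using n1(3) rpos
            by (simp add: field_simps add_pos_nonneg)
          finally show ?thesis using n0 unfolding q_def by (intro divide_right_mono mult_right_mono) auto
        qed
        finally show ?thesis by simp
      qed
      define w where "w = W1 r / r"
      have G1s': "G1 s = w / 2" unfolding G1s w_def by simp
      have L1: "(W1 r / r) *\<^sub>R z \<bullet> h = w * p" unfolding w_def p_def by simp
      have L2: "(jmat (W1 r / r) B z *v h) \<bullet> h = w * q + B * p^2"
        unfolding jmat_quad w_def p_def q_def n_def ..
      have ident: "(W1 r / r) *\<^sub>R z \<bullet> h + 1 / 2 * ((jmat (W1 r / r) B z *v h) \<bullet> h) + e * n^2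
          - (G1 s * (2*p+q) + (G2 s / 2) * (2*p+q)^2 + e' * (2*p+q)^2)
          = e * q - e' * (2*p+q)^2 - (B/8) * (4*p*q + q^2)"
        unfolding L1 L2 G1s' G2s q_def[symmetric] by (simp add: algebra_simps power2_eq_square)
      have Bp: "(B/8) * (4*p*q + q^2) \<le> (e/2) * q" using Bpart by linarith
      show "W (norm y) - W r \<le> (W1 r / r) *\<^sub>R z \<bullet> (y - z) + 1 / 2 * ((jmat (W1 r / r) B z *v (y - z)) \<bullet> (y - z)) + e * (norm (y - z))\<^sup>2"
      proof -
        define X where "X = G1 s * (2 * p + q) + G2 s / 2 * (2 * p + q)\<^sup>2 + e' * (2 * p + q)\<^sup>2"
        define Y where "Y = (W1 r / r) *\<^sub>R z \<bullet> h + 1 / 2 * ((jmat (W1 r / r) B z *v h) \<bullet> h) + e * q"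
        define a1 where "a1 = e' * (2 * p + q)\<^sup>2"
        define b1 where "b1 = B / 8 * (4 * p * q + q\<^sup>2)"
        define c1 where "c1 = e * q"
        have 1: "W (norm y) - W r \<le> X" using T unfolding X_def .
        have 2: "Y - X = c1 - a1 - b1" using ident unfolding X_def Y_def a1_def b1_def c1_def n_def q_def .
        have 3: "a1 \<le> c1 / 2" using e'part unfolding a1_def c1_def by simp
        have 4: "b1 \<le> c1 / 2" using Bp unfolding b1_def c1_def by simp
        have "W (norm y) - W r \<le> Y" using 1 2 3 4 by linarith
        thus ?thesis unfolding Y_def h_def n_def q_def .
      qed
    qed
  qed
qed

lemma usc_on_subset: "usc_on T f \<Longrightarrow> S \<subseteq> T \<Longrightarrow> usc_on S f"
  unfolding usc_on_def by blast

lemma usc_on_add_cont: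
  fixes f g :: "'a::metric_space \<Rightarrow> real"
  assumes "usc_on S f" "continuous_on S g"
  shows "usc_on S (\<lambda>x. f x + g x)"
  unfolding usc_on_def
proof (intro ballI allI impI)
  fix x e assume x: "x \<in> S" and e: "(e::real) > 0"
  obtain d1 where d1: "d1 > 0" "\<forall>y\<in>S. dist y x < d1 \<longrightarrow> f y < f x + e/2"
    using assms(1) x e unfolding usc_on_def by (meson half_gt_zero)
  obtain d2 where d2: "d2 > 0" "\<forall>y\<in>S. dist y x < d2 \<longrightarrow> dist (g y) (g x) < e/2"
    using assms(2) x e unfolding continuous_on_iff by (meson half_gt_zero)
  show "\<exists>d>0. \<forall>y\<in>S. dist y x < d \<longrightarrow> f y + g y < f x + g x + e"
  proof (intro exI[of _ "min d1 d2"] conjI ballI impI)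
    show "min d1 d2 > 0" using d1 d2 by simp
  next
    fix y assume "y \<in> S" "dist y x < min d1 d2"
    hence "f y < f x + e/2" "dist (g y) (g x) < e/2" using d1 d2 by auto
    hence "g y < g x + e/2" unfolding dist_real_def by linarith
    thus "f y + g y < f x + g x + e" using \<open>f y < f x + e/2\<close> by linarith
  qed
qed

locale sol =
  fixes \<Omega> :: "(real^'n) set" and c :: "real \<Rightarrow> real" and lam :: real and u :: "real^'n \<Rightarrow> real"
  assumes op: "open \<Omega>" and sol: "nonneg_solution \<Omega> c lam u"
    and cpos: "\<forall>r>0. c r > 0" and cmono: "\<forall>r s. 0 < r \<and> r \<le> s \<longrightarrow> c s \<le> c r"
    and lam: "lam > 3"
begin

lemma u_nonneg: "x \<in> closure \<Omega> \<Longrightarrow> u x \<ge> 0"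
  using sol unfolding nonneg_solution_def by blast

lemma u_usc: "usc_on (closure \<Omega>) u"
  using sol unfolding nonneg_solution_def by blast

lemma u_bdry: "x \<in> frontier \<Omega> \<Longrightarrow> u x = 0"
  using sol unfolding nonneg_solution_def by blast

lemma jetcond: "x \<in> \<Omega> \<Longrightarrow> (v, A) \<in> superjet2 \<Omega> u x \<Longrightarrow> (A *v v) \<bullet> v \<ge> c (norm x) * u x powr lam"
  using sol unfolding nonneg_solution_def by fast

lemma cmono': "0 < r \<Longrightarrow> r \<le> s \<Longrightarrow> c s \<le> c r"
  using cmono by blast

lemma closure_split: "x \<in> closure \<Omega> \<Longrightarrow> x \<notin> \<Omega> \<Longrightarrow> x \<in> frontier \<Omega>"
  using op by (simp add: frontier_def interior_open)

lemma pos_in_Omega: "x \<in> closure \<Omega> \<Longrightarrow> u x > 0 \<Longrightarrow> x \<in> \<Omega>"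
  using closure_split u_bdry by force

lemma cone_contra:
  assumes "0 \<in> \<Omega>" "u 0 > 0" "\<epsilon> > 0" "\<delta> > 0"
    and H: "\<forall>x\<in>\<Omega>. norm x < \<delta> \<longrightarrow> u x - u 0 \<le> - \<epsilon> * norm x + C * (norm x)^2"
  shows False
proof -
  obtain i :: 'n where True by simp
  define e :: "real^'n" where "e = axis i 1"
  have ne: "norm e = 1" unfolding e_def by simp
  define K where "K = 4 * (\<bar>c 0 * u 0 powr lam\<bar> + 1) / \<epsilon>^2"
  have Kpos: "K > 0" unfolding K_def using assms(3) by (simp add: add_pos_nonneg)
  define C' where "C' = max C 0"
  define v where "v = (\<epsilon>/2) *\<^sub>R e"
  define A where "A = jmat (-K) 0 e"
  have "(v, A) \<in> superjet2 \<Omega> u 0"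
    unfolding superjet2_def
  proof (clarify, intro conjI allI impI)
    show "transpose A = A" unfolding A_def by (rule jmat_sym)
  next
    fix e' :: real assume e': "e' > 0"
    define d where "d = min \<delta> (\<epsilon> / (2 * (C' + K/2) + 1))"
    have C'0: "C' \<ge> 0" unfolding C'_def by simp
    have dpos: "d > 0" unfolding d_def using assms(3,4) C'0 Kpos by (simp add: add_pos_nonneg)
    show "\<exists>d>0. \<forall>y\<in>\<Omega>. norm (y - 0) < d \<longrightarrow>
        u y - u 0 \<le> v \<bullet> (y - 0) + 1 / 2 * ((A *v (y - 0)) \<bullet> (y - 0)) + e' * (norm (y - 0))\<^sup>2"
    proof (intro exI[of _ d] conjI ballI impI dpos)
      fix y assume y: "y \<in> \<Omega>" "norm (y - 0) < d"
      define n where "n = norm y"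
      have n0: "n \<ge> 0" unfolding n_def by simp
      have nd: "n < \<delta>" "n < \<epsilon> / (2 * (C' + K/2) + 1)" using y unfolding n_def d_def by auto
      have "(2 * (C' + K/2) + 1) * n < \<epsilon>" using nd(2) C'0 Kpos by (simp add: field_simps add_pos_nonneg)
      hence key: "(C' + K/2) * n \<le> \<epsilon> / 2" using n0 by (simp add: algebra_simps)
      have "u y - u 0 \<le> - \<epsilon> * n + C * n^2" using H y nd(1) unfolding n_def by simp
      also have "\<dots> \<le> - \<epsilon> * n + C' * n^2" unfolding C'_def by (intro add_left_mono mult_right_mono) auto
      also have "\<dots> \<le> -(\<epsilon>/2) * n - (K/2) * n^2"
      proof -
        have "(C' + K/2) * n * n \<le> (\<epsilon>/2) * n" using key n0 by (rule mult_right_mono)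
        thus ?thesis by (simp add: algebra_simps power2_eq_square)
      qed
      also have "\<dots> \<le> v \<bullet> y + 1/2 * ((A *v y) \<bullet> y) + e' * n^2"
      proof -
        have "\<bar>e \<bullet> y\<bar> \<le> n" using Cauchy_Schwarz_ineq2[of e y] ne unfolding n_def by simp
        hence "-n \<le> e \<bullet> y" by linarith
        hence "(\<epsilon>/2) * (-n) \<le> (\<epsilon>/2) * (e \<bullet> y)" using assms(3) by (intro mult_left_mono) auto
        hence "-(\<epsilon>/2) * n \<le> v \<bullet> y" unfolding v_def by simp
        moreover have "1/2 * ((A *v y) \<bullet> y) = -(K/2) * n^2" unfolding A_def jmat_quad n_def by simp
        moreover have "e' * n^2 \<ge> 0" using e' by simp
        ultimately show ?thesis by linarith
      qed
      finally show "u y - u 0 \<le> v \<bullet> (y - 0) + 1 / 2 * ((A *v (y - 0)) \<bullet> (y - 0)) + e' * (norm (y - 0))\<^sup>2"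
        unfolding n_def by simp
    qed
  qed
  hence "(A *v v) \<bullet> v \<ge> c (norm (0::real^'n)) * u 0 powr lam" using jetcond assms(1) by blast
  hence "(A *v v) \<bullet> v \<ge> c 0 * u 0 powr lam" by simp
  moreover have "(A *v v) \<bullet> v = - (K * (\<epsilon>/2)^2)"
    unfolding A_def v_def jmat_quad using ne assms(3) by (simp add: power_mult_distrib)
  moreover have "K * (\<epsilon>/2)^2 = \<bar>c 0 * u 0 powr lam\<bar> + 1"
    unfolding K_def using assms(3) by (simp add: field_simps power2_eq_square)
  moreover have "c 0 * u 0 powr lam \<ge> - \<bar>c 0 * u 0 powr lam\<bar>" by linarith
  ultimately show False by linarith
qed

end

context sol begin

lemma no_locmax:
  assumes y: "y \<in> \<Omega>" "u y > 0" "\<delta> > 0" and H: "\<forall>x\<in>\<Omega>. norm (x - y) < \<delta> \<longrightarrow> u x \<le> u y"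
  shows False
proof (cases "y = 0")
  case False
  have "(0, jmat 0 0 y) \<in> superjet2 \<Omega> u y"
    unfolding superjet2_def
  proof (clarify, intro conjI allI impI)
    show "transpose (jmat 0 0 y) = jmat 0 0 y" by (rule jmat_sym)
  next
    fix e :: real assume e: "e > 0"
    show "\<exists>d>0. \<forall>x\<in>\<Omega>. norm (x - y) < d \<longrightarrow> u x - u y \<le> 0 \<bullet> (x - y) + 1 / 2 * ((jmat 0 0 y *v (x - y)) \<bullet> (x - y)) + e * (norm (x - y))\<^sup>2"
    proof (intro exI[of _ \<delta>] conjI ballI impI y(3))
      fix x assume "x \<in> \<Omega>" "norm (x - y) < \<delta>"
      hence "u x - u y \<le> 0" using H by auto
      moreover have "e * (norm (x - y))\<^sup>2 \<ge> 0" using e by simp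
      ultimately show "u x - u y \<le> 0 \<bullet> (x - y) + 1 / 2 * ((jmat 0 0 y *v (x - y)) \<bullet> (x - y)) + e * (norm (x - y))\<^sup>2"
        by (simp add: jmat_quad)
    qed
  qed
  hence "((jmat 0 0 y) *v 0) \<bullet> 0 \<ge> c (norm y) * u y powr lam" using jetcond y(1) by blast
  moreover have "c (norm y) * u y powr lam > 0" using cpos False y(2) by simp
  ultimately show False by simp
next
  case True
  hence y0: "y = 0" .
  obtain \<rho> where \<rho>: "\<rho> > 0" "ball 0 \<rho> \<subseteq> \<Omega>" using op y(1) y0 open_contains_ball by blast
  define \<delta>' where "\<delta>' = min \<rho> \<delta> / 2"
  have d'pos: "\<delta>' > 0" unfolding \<delta>'_def using \<rho> y(3) by simp
  define S where "S = cball (0::real^'n) \<delta>'"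
  have SO: "S \<subseteq> \<Omega>" using \<rho> d'pos unfolding S_def \<delta>'_def by (auto simp: subset_iff)
  have Sd: "\<And>x. x \<in> S \<Longrightarrow> norm x < \<delta>" using y(3) \<rho>(1) unfolding S_def \<delta>'_def by auto
  define M where "M = u 0"
  have Mpos: "M > 0" using y(2) y0 unfolding M_def by simp
  define K where "K = c \<delta>' * (M/2) powr lam"
  have Kpos: "K > 0" unfolding K_def using cpos d'pos Mpos by simp
  define \<epsilon> where "\<epsilon> = min 1 (min (M / (2*\<delta>')) (K * \<delta>' / 1296))"
  have epos: "\<epsilon> > 0" unfolding \<epsilon>_def using Mpos d'pos Kpos by simp
  have e1: "\<epsilon> \<le> 1" "\<epsilon> \<le> M / (2*\<delta>')" "\<epsilon> \<le> K * \<delta>' / 1296" unfolding \<epsilon>_def by auto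
  define \<psi> where "\<psi> = (\<lambda>x::real^'n. u x + (\<epsilon> * norm x - (4*\<epsilon>/\<delta>') * (norm x)^2))"
  have usc: "usc_on S \<psi>" unfolding \<psi>_def
    by (rule usc_on_add_cont[OF usc_on_subset[OF u_usc]])
       (use SO closure_subset in auto, intro continuous_intros, use d'pos in auto)
  obtain z where zS: "z \<in> S" and zmax: "\<forall>x\<in>S. \<psi> x \<le> \<psi> z"
    using usc_max[OF compact_cball[of 0 \<delta>'] _ usc[unfolded S_def]] d'pos unfolding S_def by force
  have z0: "0 \<in> S" unfolding S_def using d'pos by simp
  have psi0: "\<psi> 0 = M" unfolding \<psi>_def M_def by simp
  have zge: "\<psi> z \<ge> M" using zmax z0 psi0 by force
  have zO: "z \<in> \<Omega>" using zS SO by auto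
  have uzM: "u z \<le> M" using H zO Sd[OF zS] y0 unfolding M_def by simp
  have nz: "norm z \<le> \<delta>'" using zS unfolding S_def by simp
  have nzlt: "norm z < \<delta>'"
  proof (rule ccontr)
    assume "\<not> norm z < \<delta>'"
    hence "norm z = \<delta>'" using nz by simp
    hence "\<psi> z = u z + (\<epsilon> * \<delta>' - 4 * \<epsilon> * \<delta>')" unfolding \<psi>_def using d'pos by (simp add: power2_eq_square)
    moreover have "\<epsilon> * \<delta>' > 0" using epos d'pos by simp
    ultimately show False using zge uzM by linarith
  qed
  have uzlow: "u z \<ge> M / 2"
  proof -
    have "u z \<ge> M - \<epsilon> * norm z + (4*\<epsilon>/\<delta>') * (norm z)^2" using zge unfolding \<psi>_def by simp
    moreover have "(4*\<epsilon>/\<delta>') * (norm z)^2 \<ge> 0" using epos d'pos by simp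
    moreover have "\<epsilon> * norm z \<le> \<epsilon> * \<delta>'" using nz epos by (simp add: mult_left_mono)
    moreover have "\<epsilon> * \<delta>' \<le> M / 2" using e1(2) d'pos by (simp add: field_simps)
    ultimately show ?thesis by linarith
  qed
  show False
  proof (cases "z = 0")
    case True
    have "\<forall>x\<in>\<Omega>. norm x < \<delta>' \<longrightarrow> u x - u 0 \<le> - \<epsilon> * norm x + (4*\<epsilon>/\<delta>') * (norm x)^2"
    proof (intro ballI impI)
      fix x assume "x \<in> \<Omega>" "norm x < \<delta>'"
      hence "x \<in> S" unfolding S_def by simp
      hence "\<psi> x \<le> \<psi> 0" using zmax True by simp
      thus "u x - u 0 \<le> - \<epsilon> * norm x + (4*\<epsilon>/\<delta>') * (norm x)^2" unfolding \<psi>_def by simp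
    qed
    thus False using cone_contra[of \<epsilon> \<delta>'] y(1,2) y0 epos d'pos by blast
  next
    case False
    define nz where "nz = norm z"
    have nzpos: "nz > 0" using False unfolding nz_def by simp
    define t where "t = - \<epsilon> / nz + 8 * \<epsilon> / \<delta>'"
    define v where "v = t *\<^sub>R z"
    define A where "A = jmat (8*\<epsilon>/\<delta>') 0 z"
    have "(v, A) \<in> superjet2 \<Omega> u z"
      unfolding superjet2_def
    proof (clarify, intro conjI allI impI)
      show "transpose A = A" unfolding A_def by (rule jmat_sym)
    next
      fix e :: real assume e: "e > 0"
      show "\<exists>d>0. \<forall>x\<in>\<Omega>. norm (x - z) < d \<longrightarrow> u x - u z \<le> v \<bullet> (x - z) + 1 / 2 * ((A *v (x - z)) \<bullet> (x - z)) + e * (norm (x - z))\<^sup>2"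
      proof (intro exI[of _ "\<delta>' - nz"] conjI ballI impI)
        show "\<delta>' - nz > 0" using nzlt unfolding nz_def by simp
      next
        fix x assume x: "x \<in> \<Omega>" "norm (x - z) < \<delta>' - nz"
        define h where "h = x - z"
        have "norm x \<le> norm z + norm (x - z)" by (metis norm_triangle_sub)
        hence "x \<in> S" using x unfolding S_def nz_def by simp
        hence "\<psi> x \<le> \<psi> z" using zmax by blast
        hence 1: "u x - u z \<le> \<epsilon> * (nz - norm x) + (4*\<epsilon>/\<delta>') * ((norm x)^2 - nz^2)"
          unfolding \<psi>_def nz_def by (simp add: algebra_simps)
        have xzh: "x = z + h" unfolding h_def by simp
        have 2: "(norm x)^2 - nz^2 = 2 * (z \<bullet> h) + (norm h)^2"
          unfolding xzh norm_add_sq nz_def by simp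
        have "(1/nz) * (z \<bullet> x) \<le> norm x"
        proof -
          have "z \<bullet> x \<le> nz * norm x" unfolding nz_def by (rule norm_cauchy_schwarz)
          thus ?thesis using nzpos by (simp add: field_simps)
        qed
        moreover have "z \<bullet> x = nz^2 + z \<bullet> h" unfolding xzh nz_def by (simp add: inner_add_right dot_square_norm)
        ultimately have "nz + (1/nz) * (z \<bullet> h) \<le> norm x" using nzpos by (simp add: field_simps power2_eq_square)
        hence "nz - norm x \<le> - ((1/nz) * (z \<bullet> h))" by linarith
        hence "\<epsilon> * (nz - norm x) \<le> \<epsilon> * (- ((1/nz) * (z \<bullet> h)))" using epos by (intro mult_left_mono) auto
        hence 3: "\<epsilon> * (nz - norm x) \<le> - (\<epsilon>/nz) * (z \<bullet> h)" by simp
        have 4: "v \<bullet> h + 1/2 * ((A *v h) \<bullet> h) = - (\<epsilon>/nz) * (z \<bullet> h) + (4*\<epsilon>/\<delta>') * (2 * (z \<bullet> h) + (norm h)^2)"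
          unfolding v_def A_def jmat_quad t_def by (simp add: algebra_simps)
        have 5: "e * (norm h)^2 \<ge> 0" using e by simp
        show "u x - u z \<le> v \<bullet> (x - z) + 1 / 2 * ((A *v (x - z)) \<bullet> (x - z)) + e * (norm (x - z))\<^sup>2"
          using 1[unfolded 2] 3 4 5 unfolding h_def[symmetric] by linarith
      qed
    qed
    hence J: "(A *v v) \<bullet> v \<ge> c nz * u z powr lam" using jetcond zO unfolding nz_def by blast
    have nv: "norm v \<le> 9 * \<epsilon>"
    proof -
      have "norm v = \<bar>t\<bar> * nz" unfolding v_def nz_def by simp
      also have "\<dots> = \<bar>- \<epsilon> + 8 * \<epsilon> * nz / \<delta>'\<bar>" unfolding t_def using nzpos
        by (simp add: abs_mult[symmetric] field_simps)
      also have "\<dots> \<le> \<epsilon> + 8 * \<epsilon> * nz / \<delta>'" using epos nzpos d'pos by (simp add: abs_le_iff)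
      also have "8 * \<epsilon> * nz / \<delta>' \<le> 8 * \<epsilon>" using nzlt epos d'pos unfolding nz_def by (simp add: field_simps)
      finally show ?thesis by simp
    qed
    have "(A *v v) \<bullet> v = (8*\<epsilon>/\<delta>') * (norm v)^2" unfolding A_def jmat_quad by simp
    also have "\<dots> \<le> (8*\<epsilon>/\<delta>') * (81 * \<epsilon>^2)"
    proof -
      have "(norm v)^2 \<le> (9*\<epsilon>)^2" using nv by (intro power_mono) auto
      thus ?thesis using epos d'pos by (intro mult_left_mono) (auto simp: power_mult_distrib)
    qed
    also have "\<dots> \<le> (8*\<epsilon>/\<delta>') * 81"
    proof -
      have "\<epsilon>^2 \<le> 1" using e1(1) epos by (simp add: power_le_one)
      thus ?thesis using epos d'pos by (intro mult_left_mono) auto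
    qed
    also have "\<dots> = 648 * \<epsilon> / \<delta>'" by simp
    also have "\<dots> \<le> K / 2" using e1(3) d'pos by (simp add: field_simps)
    finally have up: "(A *v v) \<bullet> v \<le> K / 2" .
    have "c nz * u z powr lam \<ge> K"
    proof -
      have "c nz \<ge> c \<delta>'" using cmono' nzpos nzlt unfolding nz_def by simp
      moreover have "u z powr lam \<ge> (M/2) powr lam" using uzlow Mpos lam by (intro powr_mono2) auto
      moreover have "(M/2) powr lam \<ge> 0" by simp
      moreover have "c \<delta>' \<ge> 0" using cpos d'pos by (simp add: less_imp_le)
      ultimately show ?thesis unfolding K_def by (intro mult_mono) auto
    qed
    thus False using J up Kpos by linarith
  qed
qed

end

locale sol0 = sol \<Omega> c lam u for \<Omega> :: "(real^'n) set" and c lam u +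
  fixes x0 :: "real^'n"
  assumes x0: "x0 \<in> closure \<Omega>" "u x0 > 0"
begin

definition Mf :: "real \<Rightarrow> real" where
  "Mf r = Sup (u ` (closure \<Omega> \<inter> cball 0 r))"

lemma max_sphere:
  assumes "r \<ge> norm x0"
  shows "\<exists>y. y \<in> closure \<Omega> \<and> norm y = r \<and> (\<forall>x\<in>closure \<Omega>. norm x \<le> r \<longrightarrow> u x \<le> u y)"
proof -
  define K where "K = closure \<Omega> \<inter> cball (0::real^'n) r"
  have cK: "compact K" unfolding K_def by (simp add: compact_Int_closed closed_Int_compact)
  have x0K: "x0 \<in> K" unfolding K_def using x0 assms by simp
  have "usc_on K u" using u_usc by (rule usc_on_subset) (auto simp: K_def)
  then obtain y where yK: "y \<in> K" and ymax: "\<forall>x\<in>K. u x \<le> u y"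
    using usc_max[OF cK] x0K by blast
  have uy: "u y > 0" using ymax x0K x0(2) by force
  have yO: "y \<in> \<Omega>" using pos_in_Omega yK uy unfolding K_def by blast
  have ny: "norm y = r"
  proof (rule ccontr)
    assume "norm y \<noteq> r"
    hence lt: "norm y < r" using yK unfolding K_def by simp
    have "\<forall>x\<in>\<Omega>. norm (x - y) < r - norm y \<longrightarrow> u x \<le> u y"
    proof (intro ballI impI)
      fix x assume "x \<in> \<Omega>" "norm (x - y) < r - norm y"
      moreover have "norm x \<le> norm y + norm (x - y)" by (metis norm_triangle_sub)
      ultimately have "x \<in> K" unfolding K_def using closure_subset by fastforce
      thus "u x \<le> u y" using ymax by blast
    qed
    moreover have "r - norm y > 0" using lt by simp
    ultimately show False using no_locmax[OF yO uy] by blast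
  qed
  show ?thesis using yK ymax ny unfolding K_def by auto
qed

lemma Mf_props:
  assumes "r \<ge> norm x0"
  shows "\<exists>y. y \<in> closure \<Omega> \<and> norm y = r \<and> u y = Mf r" "\<And>x. x \<in> closure \<Omega> \<Longrightarrow> norm x \<le> r \<Longrightarrow> u x \<le> Mf r"
proof -
  obtain y where y: "y \<in> closure \<Omega>" "norm y = r" "\<forall>x\<in>closure \<Omega>. norm x \<le> r \<longrightarrow> u x \<le> u y"
    using max_sphere[OF assms] by blast
  have "Mf r = u y" unfolding Mf_def
    by (rule cSup_eq_maximum) (use y in auto)
  thus "\<exists>y. y \<in> closure \<Omega> \<and> norm y = r \<and> u y = Mf r" using y by auto
  show "\<And>x. x \<in> closure \<Omega> \<Longrightarrow> norm x \<le> r \<Longrightarrow> u x \<le> Mf r" using y \<open>Mf r = u y\<close> by auto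
qed

lemma Mf_pos: "r \<ge> norm x0 \<Longrightarrow> Mf r \<ge> u x0"
  using Mf_props(2)[of r x0] x0 by simp

lemma Mf_strict: assumes "norm x0 \<le> r" "r < r'" shows "Mf r < Mf r'"
proof -
  obtain y where y: "y \<in> closure \<Omega>" "norm y = r" "u y = Mf r" using Mf_props(1)[OF assms(1)] by blast
  have le: "Mf r \<le> Mf r'" using Mf_props(2)[of r' y] y assms by simp
  show ?thesis
  proof (rule ccontr)
    assume "\<not> Mf r < Mf r'"
    hence eq: "u y = Mf r'" using le y by simp
    have uy: "u y > 0" using y Mf_pos[OF assms(1)] x0 by simp
    have yO: "y \<in> \<Omega>" using pos_in_Omega y uy by blast
    have "\<forall>x\<in>\<Omega>. norm (x - y) < r' - r \<longrightarrow> u x \<le> u y"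
    proof (intro ballI impI)
      fix x assume "x \<in> \<Omega>" "norm (x - y) < r' - r"
      moreover have "norm x \<le> norm y + norm (x - y)" by (metis norm_triangle_sub)
      ultimately show "u x \<le> u y" using Mf_props(2)[of r' x] eq y assms closure_subset by fastforce
    qed
    moreover have "r' - r > 0" using assms by simp
    ultimately show False using no_locmax[OF yO uy] by blast
  qed
qed

lemma compare:
  fixes W W1 W2 :: "real \<Rightarrow> real"
  assumes ab: "norm x0 \<le> a" "0 < a" "a < b"
    and cont: "continuous_on {a..b} W" and W0: "\<forall>r\<in>{a..b}. W r \<ge> 0"
    and d1: "\<forall>t\<in>{a<..<b}. (W has_real_derivative W1 t) (at t)"
    and d2: "\<forall>t\<in>{a<..<b}. (W1 has_real_derivative W2 t) (at t)"
    and c2: "continuous_on {a<..<b} W2"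
    and ineq: "\<forall>r\<in>{a<..<b}. W2 r * (W1 r)^2 \<le> c r * W r powr lam"
    and bnd: "Mf a \<le> W a" "Mf b \<le> W b"
    and r: "a \<le> r" "r \<le> b"
  shows "Mf r \<le> W r"
proof -
  define K where "K = closure \<Omega> \<inter> {x::real^'n. a \<le> norm x \<and> norm x \<le> b}"
  have "closed {x::real^'n. a \<le> norm x \<and> norm x \<le> b}"
    by (intro closed_Collect_conj closed_Collect_le continuous_intros)
  moreover have "bounded {x::real^'n. a \<le> norm x \<and> norm x \<le> b}"
    by (rule bounded_subset[OF bounded_cball[of 0 b]]) auto
  ultimately have cK: "compact K" unfolding K_def
    by (simp add: compact_eq_bounded_closed closed_Int bounded_Int)
  obtain y0 where y0: "y0 \<in> closure \<Omega>" "norm y0 = r" "u y0 = Mf r" using Mf_props(1)[of r] ab r by force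
  have y0K: "y0 \<in> K" unfolding K_def using y0 r by simp
  define \<psi> where "\<psi> = (\<lambda>x::real^'n. u x + (- W (norm x)))"
  have "continuous_on K (\<lambda>x. - W (norm x))"
  proof -
    have "continuous_on K (W \<circ> norm)"
      by (rule continuous_on_compose) (auto intro!: continuous_intros continuous_on_subset[OF cont] simp: K_def)
    thus ?thesis by (auto intro: continuous_intros simp: o_def)
  qed
  hence usc: "usc_on K \<psi>" unfolding \<psi>_def
    by (intro usc_on_add_cont usc_on_subset[OF u_usc]) (auto simp: K_def)
  obtain z where zK: "z \<in> K" and zmax: "\<forall>x\<in>K. \<psi> x \<le> \<psi> z" using usc_max[OF cK _ usc] y0K by blast
  show ?thesis
  proof (rule ccontr)
    assume "\<not> Mf r \<le> W r"
    hence "\<psi> y0 > 0" unfolding \<psi>_def using y0 by simp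
    hence pz: "\<psi> z > 0" using zmax y0K by force
    have zc: "z \<in> closure \<Omega>" "a \<le> norm z" "norm z \<le> b" using zK unfolding K_def by auto
    have Wz0: "W (norm z) \<ge> 0" using W0 zc by simp
    have uzW: "u z > W (norm z)" using pz unfolding \<psi>_def by simp
    hence uz: "u z > 0" using Wz0 by simp
    have zO: "z \<in> \<Omega>" using pos_in_Omega zc uz by blast
    have na: "norm z \<noteq> a"
    proof
      assume "norm z = a"
      hence "u z \<le> Mf a" using Mf_props(2)[of a z] ab zc by simp
      thus False using bnd uzW \<open>norm z = a\<close> by simp
    qed
    have nb: "norm z \<noteq> b"
    proof
      assume "norm z = b"
      hence "u z \<le> Mf b" using Mf_props(2)[of b z] ab zc by simp
      thus False using bnd uzW \<open>norm z = b\<close> by simp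
    qed
    have zin: "a < norm z" "norm z < b" using na nb zc by auto
    define rz where "rz = norm z"
    define v where "v = (W1 rz / rz) *\<^sub>R z"
    define A where "A = jmat (W1 rz / rz) ((W2 rz - W1 rz / rz) / rz^2) z"
    have J: "jet (\<lambda>x. W (norm x)) z v A"
      unfolding v_def A_def rz_def using rad_jet[OF ab(2) zin d1 d2 c2] .
    have "(v, A) \<in> superjet2 \<Omega> u z"
    proof (rule jet_superjet[OF J])
      show "transpose A = A" unfolding A_def by (rule jmat_sym)
      show "min (norm z - a) (b - norm z) > 0" using zin by simp
      show "\<forall>y\<in>\<Omega>. norm (y - z) < min (norm z - a) (b - norm z) \<longrightarrow> u y - u z \<le> W (norm y) - W (norm z)"
      proof (intro ballI impI)
        fix y assume y: "y \<in> \<Omega>" "norm (y - z) < min (norm z - a) (b - norm z)"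
        have "norm y \<le> norm z + norm (y - z)" by (metis norm_triangle_sub)
        moreover have "norm z \<le> norm y + norm (y - z)" by (metis norm_minus_commute norm_triangle_sub)
        ultimately have "y \<in> K" unfolding K_def using y closure_subset by fastforce
        hence "\<psi> y \<le> \<psi> z" using zmax by blast
        thus "u y - u z \<le> W (norm y) - W (norm z)" unfolding \<psi>_def by simp
      qed
    qed
    hence "(A *v v) \<bullet> v \<ge> c rz * u z powr lam" using jetcond zO unfolding rz_def by blast
    moreover have "(A *v v) \<bullet> v = W2 rz * (W1 rz)^2"
    proof -
      have rzp: "rz > 0" using zin ab unfolding rz_def by linarith
      have "(A *v v) \<bullet> v = (W1 rz / rz)^2 * ((W1 rz / rz) * rz^2 + ((W2 rz - W1 rz / rz) / rz^2) * rz^4)"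
        unfolding A_def v_def jmat_quad_z rz_def ..
      also have "\<dots> = W2 rz * (W1 rz)^2" using rzp
        by (simp add: field_simps power2_eq_square power4_eq_xxxx)
      finally show ?thesis .
    qed
    moreover have "W2 rz * (W1 rz)^2 \<le> c rz * W rz powr lam" using ineq zin unfolding rz_def by simp
    moreover have "c rz * W rz powr lam < c rz * u z powr lam"
    proof -
      have "rz > 0" using zin ab unfolding rz_def by linarith
      hence "c rz > 0" using cpos by simp
      moreover have "W rz powr lam < u z powr lam" using Wz0 uzW lam unfolding rz_def
        by (intro powr_less_mono2) auto
      ultimately show ?thesis by simp
    qed
    ultimately show False by linarith
  qed
qed

end

lemma deriv_below:
  fixes W :: "real \<Rightarrow> real"
  assumes "(W has_real_derivative w) (at a)" "w < \<sigma>" "a < b"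
  shows "\<exists>r. a < r \<and> r \<le> b \<and> W r < W a + \<sigma> * (r - a)"
proof -
  have "((\<lambda>h. (W (a + h) - W a) / h) \<longlongrightarrow> w) (at 0)"
    using assms(1) by (simp add: DERIV_def)
  hence "eventually (\<lambda>h. (W (a + h) - W a) / h < \<sigma>) (at 0)"
    using assms(2) by (rule order_tendstoD)
  then obtain d where d: "d > 0" "\<forall>h. h \<noteq> 0 \<and> dist h 0 < d \<longrightarrow> (W (a + h) - W a) / h < \<sigma>"
    unfolding eventually_at by auto
  define h where "h = min (d/2) (b - a)"
  have hp: "h > 0" "h < d" "h \<le> b - a" unfolding h_def using d assms(3) by auto
  hence "(W (a + h) - W a) / h < \<sigma>" using d(2) by simp
  hence "W (a + h) - W a < \<sigma> * h" using hp by (simp add: field_simps)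
  thus ?thesis using hp by (intro exI[of _ "a + h"]) auto
qed

context sol0 begin

lemma cross:
  fixes W W1 W2 :: "real \<Rightarrow> real"
  assumes ab: "norm x0 \<le> a" "0 < a" "a < b"
    and cont: "continuous_on {a..b} W" and W0: "\<forall>r\<in>{a..b}. W r \<ge> 0"
    and d1: "\<forall>t\<in>{a<..<b}. (W has_real_derivative W1 t) (at t)"
    and d2: "\<forall>t\<in>{a<..<b}. (W1 has_real_derivative W2 t) (at t)"
    and c2: "continuous_on {a<..<b} W2"
    and ineq: "\<forall>r\<in>{a<..<b}. W2 r * (W1 r)^2 \<le> c r * W r powr lam"
    and bnd: "W a = Mf a" "Mf b \<le> W b"
    and da: "(W has_real_derivative w) (at a)" "w < \<sigma>"
    and line: "\<forall>r. a < r \<longrightarrow> Mf r \<ge> Mf a + \<sigma> * (r - a)"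
  shows False
proof -
  obtain r where r: "a < r" "r \<le> b" "W r < W a + \<sigma> * (r - a)" using deriv_below[OF da ab(3)] by blast
  have "Mf r \<le> W r" using compare[OF ab cont W0 d1 d2 c2 ineq _ bnd(2)] bnd(1) r by simp
  thus False using line r bnd(1) by force
qed

lemma chord:
  assumes "norm x0 \<le> a" "0 < a" "a < r" "r < b"
  shows "Mf r \<le> Mf a + (Mf b - Mf a) * (r - a) / (b - a)"
proof -
  define q where "q = (Mf b - Mf a) / (b - a)"
  have q0: "q \<ge> 0" unfolding q_def using Mf_strict[of a b] assms by simp
  have Ma: "Mf a > 0" using Mf_pos[of a] x0 assms by simp
  define W where "W = (\<lambda>t. Mf a + q * (t - a))"
  have "Mf r \<le> W r"
  proof (rule compare[of a b W "\<lambda>t. q" "\<lambda>t. 0"])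
    show "norm x0 \<le> a" "0 < a" "a < b" using assms by auto
    show "continuous_on {a..b} W" unfolding W_def by (intro continuous_intros)
    show "\<forall>r\<in>{a..b}. W r \<ge> 0" unfolding W_def using Ma q0 by auto
    show "\<forall>t\<in>{a<..<b}. (W has_real_derivative q) (at t)"
      unfolding W_def by (auto intro!: derivative_eq_intros)
    show "\<forall>t\<in>{a<..<b}. ((\<lambda>t. q) has_real_derivative 0) (at t)" by auto
    show "continuous_on {a<..<b} (\<lambda>t. 0::real)" by simp
    show "\<forall>r\<in>{a<..<b}. 0 * q^2 \<le> c r * W r powr lam"
    proof
      fix r assume "r \<in> {a<..<b}"
      hence "c r > 0" using cpos assms by simp
      thus "0 * q^2 \<le> c r * W r powr lam" by simp
    qed
    show "Mf a \<le> W a" unfolding W_def by simp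
    show "Mf b \<le> W b" unfolding W_def q_def using assms by simp
    show "a \<le> r" "r \<le> b" using assms by auto
  qed
  thus ?thesis unfolding W_def q_def by (simp add: field_simps)
qed

end

locale sol1 = sol0 \<Omega> c lam u x0 for \<Omega> :: "(real^'n) set" and c lam u x0 +
  fixes R1 :: real
  assumes R1: "R1 > 0" "norm x0 \<le> R1"
begin

definition \<rho> :: "nat \<Rightarrow> real" where "\<rho> j = R1 * 2^j"
definition m :: "nat \<Rightarrow> real" where "m j = Mf (\<rho> j)"
definition \<sigma> :: "nat \<Rightarrow> real" where "\<sigma> j = (m (Suc j) - m j) / \<rho> j"

lemma rho_pos: "\<rho> j > 0" unfolding \<rho>_def using R1 by simp
lemma rho_Suc: "\<rho> (Suc j) = 2 * \<rho> j" unfolding \<rho>_def by simp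
lemma rho_ge: "\<rho> j \<ge> norm x0"
proof -
  have "R1 \<le> R1 * 2^j" using R1 by simp
  thus ?thesis unfolding \<rho>_def using R1 by linarith
qed
lemma m_pos: "m j > 0" unfolding m_def using Mf_pos[OF rho_ge[of j]] x0 by simp
lemma m_strict: "m j < m (Suc j)" unfolding m_def using Mf_strict[OF rho_ge[of j]] rho_Suc rho_pos[of j] by simp
lemma sigma_pos: "\<sigma> j > 0" unfolding \<sigma>_def using m_strict[of j] rho_pos[of j] by simp
lemma m_Suc: "m (Suc j) = m j + \<sigma> j * \<rho> j" unfolding \<sigma>_def using rho_pos[of j] by simp

lemma line: "\<forall>r. \<rho> (Suc j) < r \<longrightarrow> Mf r \<ge> m (Suc j) + \<sigma> j * (r - \<rho> (Suc j))"
proof (intro allI impI)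
  fix r assume r: "\<rho> (Suc j) < r"
  define d where "d = \<rho> j"
  define L where "L = r - \<rho> j"
  have dp: "d > 0" unfolding d_def by (rule rho_pos)
  have Ld: "L > d" unfolding L_def d_def using r rho_Suc[of j] by simp
  have "m (Suc j) \<le> m j + (Mf r - m j) * (\<rho> (Suc j) - \<rho> j) / (r - \<rho> j)"
    unfolding m_def using chord[of "\<rho> j" "\<rho> (Suc j)" r] rho_ge[of j] r rho_Suc[of j] rho_pos[of j] by simp
  hence "\<sigma> j * d \<le> (Mf r - m j) * d / L"
    using m_Suc[of j] rho_Suc[of j] unfolding d_def L_def by simp
  hence "\<sigma> j * d * L \<le> (Mf r - m j) * d" using Ld dp by (simp add: field_simps)
  hence "\<sigma> j * L \<le> Mf r - m j" using dp by (simp add: mult.commute mult.left_commute)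
  thus "Mf r \<ge> m (Suc j) + \<sigma> j * (r - \<rho> (Suc j))"
    using m_Suc[of j] rho_Suc[of j] unfolding L_def by (simp add: algebra_simps)
qed

lemma sigma_mono: "\<sigma> j \<le> \<sigma> (Suc j)"
proof -
  have "\<rho> (Suc j) < \<rho> (Suc (Suc j))" using rho_Suc[of "Suc j"] rho_pos[of "Suc j"] by simp
  hence "Mf (\<rho> (Suc (Suc j))) \<ge> m (Suc j) + \<sigma> j * (\<rho> (Suc (Suc j)) - \<rho> (Suc j))"
    using line[of j] by blast
  hence "m (Suc (Suc j)) - m (Suc j) \<ge> \<sigma> j * \<rho> (Suc j)" unfolding m_def using rho_Suc[of "Suc j"] by simp
  thus ?thesis unfolding \<sigma>_def[of "Suc j"] using rho_pos[of "Suc j"] by (simp add: field_simps)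
qed

lemma sigma_mono': "i \<le> j \<Longrightarrow> \<sigma> i \<le> \<sigma> j"
  by (induction j rule: dec_induct) (auto intro: order_trans sigma_mono)

lemma m_Suc_lower: "m (Suc j) \<ge> \<sigma> j * \<rho> j" using m_Suc[of j] m_pos[of j] by simp

lemma m_Suc_upper: "m (Suc j) \<le> m 0 + \<sigma> j * (\<rho> (Suc j) - \<rho> 0)"
proof (induction j)
  case 0 thus ?case using m_Suc[of 0] rho_Suc[of 0] by simp
next
  case (Suc j)
  have "m (Suc (Suc j)) = m (Suc j) + \<sigma> (Suc j) * \<rho> (Suc j)" by (rule m_Suc)
  also have "\<dots> \<le> m 0 + \<sigma> j * (\<rho> (Suc j) - \<rho> 0) + \<sigma> (Suc j) * \<rho> (Suc j)" using Suc by simp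
  also have "\<dots> \<le> m 0 + \<sigma> (Suc j) * (\<rho> (Suc j) - \<rho> 0) + \<sigma> (Suc j) * \<rho> (Suc j)"
  proof -
    have "(1::real) \<le> 2^Suc j" by (rule one_le_power) simp
    hence "\<rho> 0 \<le> \<rho> (Suc j)" unfolding \<rho>_def using R1 by simp
    thus ?thesis using sigma_mono[of j] by (simp add: mult_right_mono)
  qed
  also have "\<dots> = m 0 + \<sigma> (Suc j) * (\<rho> (Suc (Suc j)) - \<rho> 0)" using rho_Suc[of "Suc j"] by (simp add: algebra_simps)
  finally show ?case .
qed

lemma m_Suc_upper2: "\<sigma> j * \<rho> j \<ge> m 0 \<Longrightarrow> m (Suc j) \<le> 3 * (\<sigma> j * \<rho> j)"
proof -
  assume h: "\<sigma> j * \<rho> j \<ge> m 0"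
  have "\<sigma> j * (\<rho> (Suc j) - \<rho> 0) \<le> \<sigma> j * (2 * \<rho> j)"
    using sigma_pos[of j] rho_Suc[of j] rho_pos[of 0] by (intro mult_left_mono) auto
  thus ?thesis using m_Suc_upper[of j] h by simp
qed

end

context sol1 begin

definition \<theta> :: "nat \<Rightarrow> real" where
  "\<theta> j = min 1 (c (\<rho> (Suc (Suc j))) * \<rho> j powr (lam + 1) * \<sigma> j powr (lam - 3) / 9)"

lemma theta_pos: "\<theta> j > 0"
proof -
  have "c (\<rho> (Suc (Suc j))) > 0" using cpos rho_pos by blast
  thus ?thesis unfolding \<theta>_def using rho_pos[of j] sigma_pos[of j] by simp
qed

lemma theta_le1: "\<theta> j \<le> 1" unfolding \<theta>_def by simp

lemma key_identity:
  assumes "\<sigma>' > 0" "\<rho>' > 0"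
  shows "C * \<rho>' powr (lam + 1) * \<sigma>' powr (lam - 3) * \<sigma>'^3 / \<rho>' = C * (\<sigma>' * \<rho>') powr lam"
proof -
  have 1: "\<rho>' powr (lam + 1) = \<rho>' powr lam * \<rho>'" using assms by (simp add: powr_add)
  have 2: "\<sigma>' powr (lam - 3) * \<sigma>'^3 = \<sigma>' powr lam"
  proof -
    have "\<sigma>'^3 = \<sigma>' powr 3" using assms by (simp add: powr_realpow)
    moreover have "\<sigma>' powr (lam - 3) * \<sigma>' powr 3 = \<sigma>' powr (lam - 3 + 3)" by (rule powr_add[symmetric])
    ultimately show ?thesis by simp
  qed
  have 3: "(\<sigma>' * \<rho>') powr lam = \<sigma>' powr lam * \<rho>' powr lam" using assms by (simp add: powr_mult)
  show ?thesis unfolding 1 3 2[symmetric] using assms by (simp add: field_simps)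
qed

lemma growth: "\<sigma> (Suc j) \<ge> \<sigma> j * (1 + \<theta> j)"
proof (rule ccontr)
  assume H: "\<not> \<sigma> (Suc j) \<ge> \<sigma> j * (1 + \<theta> j)"
  define a where "a = \<rho> (Suc j)"
  define b where "b = \<rho> (Suc (Suc j))"
  define sg where "sg = \<sigma> j"
  define th where "th = \<theta> j"
  have ap: "a > 0" unfolding a_def by (rule rho_pos)
  have ab: "b = 2 * a" unfolding a_def b_def by (rule rho_Suc)
  have a2: "a = 2 * \<rho> j" unfolding a_def by (rule rho_Suc)
  have sgp: "sg > 0" unfolding sg_def by (rule sigma_pos)
  have thp: "th > 0" "th \<le> 1" unfolding th_def using theta_pos theta_le1 by auto
  define s where "s = \<sigma> (Suc j) - th * sg"
  have s0: "s \<ge> 0"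
  proof -
    have "th * sg \<le> sg" using thp sgp by simp
    thus ?thesis unfolding s_def sg_def using sigma_mono[of j] by simp
  qed
  have slt: "s < sg" using H unfolding s_def sg_def th_def by (simp add: algebra_simps)
  define \<beta> where "\<beta> = th * sg / a"
  have bp: "\<beta> > 0" unfolding \<beta>_def using thp sgp ap by simp
  define W where "W = (\<lambda>t. m (Suc j) + s * (t - a) + \<beta> * (t - a)^2)"
  define W1 where "W1 = (\<lambda>t. s + 2 * \<beta> * (t - a))"
  define W2 where "W2 = (\<lambda>t::real. 2 * \<beta>)"
  have mS: "m (Suc j) > 0" by (rule m_pos)
  have dW: "\<And>t. (W has_real_derivative W1 t) (at t)"
    unfolding W_def W1_def by (auto intro!: derivative_eq_intros simp: power2_eq_square algebra_simps)
  have dW1: "\<And>t. (W1 has_real_derivative W2 t) (at t)"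
    unfolding W1_def W2_def by (auto intro!: derivative_eq_intros)
  show False
  proof (rule cross[of a b W W1 W2 s sg])
    show "norm x0 \<le> a" unfolding a_def by (rule rho_ge)
    show "0 < a" by (rule ap)
    show "a < b" using ab ap by simp
    show "continuous_on {a..b} W" unfolding W_def by (intro continuous_intros)
    show "\<forall>r\<in>{a..b}. W r \<ge> 0" unfolding W_def using mS s0 bp by auto
    show "\<forall>t\<in>{a<..<b}. (W has_real_derivative W1 t) (at t)" using dW by blast
    show "\<forall>t\<in>{a<..<b}. (W1 has_real_derivative W2 t) (at t)" using dW1 by blast
    show "continuous_on {a<..<b} W2" unfolding W2_def by simp
    show "\<forall>r\<in>{a<..<b}. W2 r * (W1 r)^2 \<le> c r * W r powr lam"
    proof
      fix t assume t: "t \<in> {a<..<b}"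
      have W1u: "W1 t \<le> 3 * sg"
      proof -
        have "2 * \<beta> * (t - a) \<le> 2 * \<beta> * a" using t ab bp by (intro mult_left_mono) auto
        also have "\<dots> = 2 * th * sg" unfolding \<beta>_def using ap by simp
        finally have "2 * \<beta> * (t - a) \<le> 2 * th * sg" .
        moreover have "th * sg \<le> sg" using thp sgp by simp
        ultimately show ?thesis unfolding W1_def using slt by linarith
      qed
      have W1l: "W1 t \<ge> 0" unfolding W1_def using s0 bp t by auto
      have "(W1 t)^2 \<le> (3 * sg)^2" using W1u W1l by (intro power_mono) auto
      hence "W2 t * (W1 t)^2 \<le> (2 * \<beta>) * (9 * sg^2)" unfolding W2_def using bp
        by (intro mult_left_mono) (auto simp: power_mult_distrib)
      also have "\<dots> = 9 * th * sg^3 / \<rho> j" unfolding \<beta>_def a2 using rho_pos[of j]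
        by (simp add: field_simps power2_eq_square power3_eq_cube)
      also have "\<dots> \<le> c b * (sg * \<rho> j) powr lam"
      proof -
        define X where "X = c b * \<rho> j powr (lam + 1) * sg powr (lam - 3)"
        have "th \<le> X / 9" unfolding th_def \<theta>_def X_def b_def sg_def by simp
        hence "9 * th * sg^3 / \<rho> j \<le> X * sg^3 / \<rho> j" using rho_pos[of j] sgp
          by (intro divide_right_mono mult_right_mono) auto
        also have "\<dots> = c b * (sg * \<rho> j) powr lam" unfolding X_def
          using key_identity[OF sgp rho_pos[of j]] by simp
        finally show ?thesis .
      qed
      also have "\<dots> \<le> c t * W t powr lam"
      proof (rule mult_mono)
        show "c b \<le> c t" using cmono' t ap by simp
        have "sg * \<rho> j \<le> m (Suc j)" unfolding sg_def by (rule m_Suc_lower)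
        also have "m (Suc j) \<le> W t" unfolding W_def using s0 bp t by auto
        finally show "(sg * \<rho> j) powr lam \<le> W t powr lam" using sgp rho_pos[of j] lam
          by (intro powr_mono2) auto
        show "0 \<le> c t" using cpos t ap by (simp add: less_imp_le)
        show "0 \<le> (sg * \<rho> j) powr lam" by simp
      qed
      finally show "W2 t * (W1 t)^2 \<le> c t * W t powr lam" .
    qed
    show "W a = Mf a" unfolding W_def m_def a_def by simp
    show "Mf b \<le> W b"
    proof -
      have "W b = m (Suc j) + s * a + th * sg * a" unfolding W_def \<beta>_def ab using ap
        by (simp add: power2_eq_square)
      also have "\<dots> = m (Suc j) + \<sigma> (Suc j) * a" unfolding s_def by (simp add: algebra_simps)
      also have "\<dots> = Mf b" using m_Suc[of "Suc j"] unfolding a_def b_def m_def by simp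
      finally show ?thesis by simp
    qed
    show "(W has_real_derivative s) (at a)" using dW[of a] unfolding W1_def by simp
    show "s < sg" by (rule slt)
    show "\<forall>r. a < r \<longrightarrow> Mf r \<ge> Mf a + sg * (r - a)"
      using line[of j] unfolding a_def sg_def m_def by simp
  qed
qed

end

lemma deriv_Tpowr:
  assumes "r < T"
  shows "((\<lambda>r. (T - r) powr p) has_real_derivative (- p) * (T - r) powr (p - 1)) (at r)"
proof -
  have "((\<lambda>r. (T - r) powr p) has_real_derivative p * (T - r) powr (p - of_nat 1) * (-1)) (at r)"
    using assms by (intro DERIV_fun_powr) (auto intro!: derivative_eq_intros)
  thus ?thesis by simp
qed

lemma powr_sq: "x > 0 \<Longrightarrow> (x powr q)^2 = x powr (2*q)"
  for x :: real by (simp add: power2_eq_square powr_add[symmetric])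

lemma powr_prod_pow: "x > 0 \<Longrightarrow> A > 0 \<Longrightarrow> (A * x powr q) powr l = A powr l * x powr (q*l)"
  for x A :: real by (simp add: powr_mult powr_powr)

lemma powr_split3: "A > 0 \<Longrightarrow> A powr l = A^3 * A powr (l - 3)"
  for A :: real
proof -
  assume A: "A > 0"
  have "A powr l = A powr (3 + (l - 3))" by simp
  also have "\<dots> = A powr 3 * A powr (l - 3)" by (rule powr_add)
  also have "A powr 3 = A^3" using A by (simp add: powr_realpow)
  finally show ?thesis .
qed

context sol1 begin

definition \<alpha> :: real where "\<alpha> = 4 / (lam - 3)"
definition \<kappa> :: real where "\<kappa> = 4 + 6 * \<alpha>"

lemma alpha_pos: "\<alpha> > 0" unfolding \<alpha>_def using lam by simp
lemma alpha_lam: "\<alpha> * (lam - 3) = 4" unfolding \<alpha>_def using lam by (simp add: field_simps)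
lemma kappa_ge: "\<kappa> \<ge> 4" unfolding \<kappa>_def using alpha_pos by simp

lemma nolaunch:
  assumes big: "\<sigma> j * \<rho> j \<ge> m 0"
  shows "c (\<kappa> * \<rho> j) * \<rho> j powr (lam + 1) * \<sigma> j powr (lam - 3) < (\<alpha> + 1) / (16 * \<alpha>)"
proof (rule ccontr)
  assume H: "\<not> ?thesis"
  define r0 where "r0 = \<rho> j"
  define a0 where "a0 = \<rho> (Suc j)"
  define sg where "sg = \<sigma> j"
  define am where "am = m (Suc j)"
  have r0p: "r0 > 0" unfolding r0_def by (rule rho_pos)
  have a0r: "a0 = 2 * r0" unfolding a0_def r0_def by (rule rho_Suc)
  have sgp: "sg > 0" unfolding sg_def by (rule sigma_pos)
  have amp: "am > 0" unfolding am_def by (rule m_pos)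
  have aml: "am \<ge> sg * r0" unfolding am_def sg_def r0_def by (rule m_Suc_lower)
  have amu: "am \<le> 3 * (sg * r0)" unfolding am_def sg_def r0_def using m_Suc_upper2 big by simp
  have ap: "\<alpha> > 0" by (rule alpha_pos)
  define D where "D = 2 * \<alpha> * am / sg"
  have Dp: "D > 0" unfolding D_def using ap amp sgp by simp
  define T where "T = a0 + D"
  define A where "A = am * D powr \<alpha>"
  have Ap: "A > 0" unfolding A_def using amp Dp by simp
  have Tk: "T \<le> \<kappa> * r0"
  proof -
    have "D \<le> 2 * \<alpha> * (3 * (sg * r0)) / sg" unfolding D_def using amu ap sgp
      by (intro divide_right_mono mult_left_mono) auto
    also have "\<dots> = 6 * \<alpha> * r0" using sgp by simp
    finally show ?thesis unfolding T_def \<kappa>_def a0r using r0p ap by (simp add: algebra_simps)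
  qed
  have Tp: "T > 0" unfolding T_def using a0r r0p Dp by simp
  define W where "W = (\<lambda>r. A * (T - r) powr (- \<alpha>))"
  define W1 where "W1 = (\<lambda>r. \<alpha> * A * (T - r) powr (- \<alpha> - 1))"
  define W2 where "W2 = (\<lambda>r. \<alpha> * (\<alpha> + 1) * A * (T - r) powr (- \<alpha> - 2))"
  have dW: "(W has_real_derivative W1 r) (at r)" if "r < T" for r
  proof -
    have "(W has_real_derivative A * ((- (- \<alpha>)) * (T - r) powr (- \<alpha> - 1))) (at r)"
      unfolding W_def by (intro DERIV_cmult deriv_Tpowr that)
    thus ?thesis unfolding W1_def by (simp add: algebra_simps)
  qed
  have dW1: "(W1 has_real_derivative W2 r) (at r)" if "r < T" for r
  proof -
    have "(W1 has_real_derivative \<alpha> * A * ((- (- \<alpha> - 1)) * (T - r) powr (- \<alpha> - 1 - 1))) (at r)"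
      unfolding W1_def by (intro DERIV_cmult deriv_Tpowr that)
    moreover have "- \<alpha> - 1 - 1 = - \<alpha> - 2" by simp
    ultimately show ?thesis unfolding W2_def by (simp add: algebra_simps)
  qed
  have coef: "\<alpha>^3 * (\<alpha> + 1) \<le> c T * A powr (lam - 3)"
  proof -
    have "A powr (lam - 3) = am powr (lam - 3) * D powr (\<alpha> * (lam - 3))"
      unfolding A_def using amp Dp by (simp add: powr_mult powr_powr)
    also have "D powr (\<alpha> * (lam - 3)) = D^4" unfolding alpha_lam using Dp by (simp add: powr_realpow)
    finally have 1: "A powr (lam - 3) = am powr (lam - 3) * D^4" .
    have 2: "D^4 = 16 * \<alpha>^4 * am^4 / sg^4" unfolding D_def by (simp add: power_divide power_mult_distrib)
    have 3: "am powr (lam - 3) * am^4 = am powr (lam + 1)"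
    proof -
      have "am^4 = am powr 4" using amp by (simp add: powr_realpow)
      moreover have "am powr (lam - 3) * am powr 4 = am powr (lam - 3 + 4)" by (rule powr_add[symmetric])
      ultimately show ?thesis by (simp add: add.commute)
    qed
    have "c T * A powr (lam - 3) = 16 * \<alpha>^4 * (c T * am powr (lam + 1) / sg^4)"
      unfolding 1 2 3[symmetric] by (simp add: field_simps)
    also have "c T * am powr (lam + 1) / sg^4 \<ge> c (\<kappa> * r0) * (sg * r0) powr (lam + 1) / sg^4"
    proof (intro divide_right_mono mult_mono)
      show "c (\<kappa> * r0) \<le> c T" using cmono' Tp Tk by simp
      show "(sg * r0) powr (lam + 1) \<le> am powr (lam + 1)" using aml sgp r0p lam by (intro powr_mono2) auto
      show "0 \<le> c T" using cpos Tp by (simp add: less_imp_le)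
      show "0 \<le> (sg * r0) powr (lam + 1)" by simp
      show "0 \<le> sg^4" by simp
    qed
    hence "16 * \<alpha>^4 * (c T * am powr (lam + 1) / sg^4) \<ge> 16 * \<alpha>^4 * (c (\<kappa> * r0) * (sg * r0) powr (lam + 1) / sg^4)"
      using ap by (intro mult_left_mono) auto
    also have "c (\<kappa> * r0) * (sg * r0) powr (lam + 1) / sg^4 = c (\<kappa> * r0) * r0 powr (lam + 1) * sg powr (lam - 3)"
    proof -
      have "sg powr (lam - 3) * sg powr 4 = sg powr (lam - 3 + 4)" by (rule powr_add[symmetric])
      hence "sg powr (lam + 1) = sg powr (lam - 3) * sg powr 4" by (simp add: add.commute)
      moreover have "sg powr 4 = sg^4" using sgp by (simp add: powr_realpow)
      ultimately show ?thesis using sgp r0p by (simp add: powr_mult field_simps)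
    qed
    also have "c (\<kappa> * r0) * r0 powr (lam + 1) * sg powr (lam - 3) \<ge> (\<alpha> + 1) / (16 * \<alpha>)"
      using H unfolding r0_def sg_def by simp
    hence "16 * \<alpha>^4 * (c (\<kappa> * r0) * r0 powr (lam + 1) * sg powr (lam - 3)) \<ge> 16 * \<alpha>^4 * ((\<alpha> + 1) / (16 * \<alpha>))"
      using ap by (intro mult_left_mono) auto
    also have "16 * \<alpha>^4 * ((\<alpha> + 1) / (16 * \<alpha>)) = \<alpha>^3 * (\<alpha> + 1)" using ap
      by (simp add: field_simps power_numeral_reduce)
    finally show ?thesis by linarith
  qed
  have TgeR: "norm x0 \<le> T" using rho_ge[of "Suc j"] Dp unfolding T_def a0_def by simp
  define MT where "MT = Mf T"
  have MTp: "MT > 0" unfolding MT_def using Mf_pos[OF TgeR] x0 by simp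
  define \<eta> where "\<eta> = min (D/2) ((A / MT) powr (1/\<alpha>))"
  have etap: "\<eta> > 0" unfolding \<eta>_def using Dp Ap MTp by simp
  define b where "b = T - \<eta>"
  have a0b: "a0 < b" unfolding b_def T_def \<eta>_def using Dp by simp
  have bT: "b < T" unfolding b_def using etap by simp
  have Wb: "W b \<ge> MT"
  proof -
    have "\<eta> \<le> (A / MT) powr (1/\<alpha>)" unfolding \<eta>_def by simp
    hence "((A / MT) powr (1/\<alpha>)) powr (- \<alpha>) \<le> \<eta> powr (- \<alpha>)" using etap ap
      by (intro powr_mono2') auto
    moreover have "((A / MT) powr (1/\<alpha>)) powr (- \<alpha>) = MT / A" using ap Ap MTp
      by (simp add: powr_powr powr_minus_divide)
    ultimately have "MT / A \<le> \<eta> powr (- \<alpha>)" by simp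
    hence "A * (MT / A) \<le> A * \<eta> powr (- \<alpha>)" using Ap by (intro mult_left_mono) auto
    thus ?thesis unfolding W_def b_def using Ap by simp
  qed
  show False
  proof (rule cross[of a0 b W W1 W2 "sg / 2" sg])
    show "norm x0 \<le> a0" unfolding a0_def by (rule rho_ge)
    show "0 < a0" using a0r r0p by simp
    show "a0 < b" by (rule a0b)
    show "continuous_on {a0..b} W"
    proof -
      have "\<forall>r\<in>{a0..b}. isCont W r"
      proof
        fix r assume "r \<in> {a0..b}"
        hence "r < T" using bT by simp
        thus "isCont W r" by (rule DERIV_isCont[OF dW])
      qed
      thus ?thesis by (simp add: continuous_at_imp_continuous_on)
    qed
    show "\<forall>r\<in>{a0..b}. W r \<ge> 0" unfolding W_def using Ap by simp
    show "\<forall>t\<in>{a0<..<b}. (W has_real_derivative W1 t) (at t)" using dW bT by auto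
    show "\<forall>t\<in>{a0<..<b}. (W1 has_real_derivative W2 t) (at t)" using dW1 bT by auto
    show "continuous_on {a0<..<b} W2" unfolding W2_def using bT
      by (intro continuous_intros) auto
    show "\<forall>r\<in>{a0<..<b}. W2 r * (W1 r)^2 \<le> c r * W r powr lam"
    proof
      fix r assume r: "r \<in> {a0<..<b}"
      define x where "x = T - r"
      have xp: "x > 0" unfolding x_def using r bT by simp
      have rp: "r > 0" using r a0r r0p by simp
      have E: "x powr (- \<alpha> - 2) * (x powr (- \<alpha> - 1))^2 = x powr (- \<alpha> * lam)"
      proof -
        have "(x powr (- \<alpha> - 1))^2 = x powr (2 * (- \<alpha> - 1))" using xp by (rule powr_sq)
        hence "x powr (- \<alpha> - 2) * (x powr (- \<alpha> - 1))^2 = x powr (- \<alpha> - 2) * x powr (2 * (- \<alpha> - 1))"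
          by simp
        also have "\<dots> = x powr (- \<alpha> - 2 + 2 * (- \<alpha> - 1))" by (rule powr_add[symmetric])
        also have "- \<alpha> - 2 + 2 * (- \<alpha> - 1) = - \<alpha> * lam" using alpha_lam by (simp add: algebra_simps)
        finally show ?thesis .
      qed
      have L: "W2 r * (W1 r)^2 = \<alpha>^3 * (\<alpha> + 1) * A^3 * x powr (- \<alpha> * lam)"
      proof -
        have "W2 r * (W1 r)^2 = (\<alpha> * (\<alpha> + 1) * A) * (\<alpha> * A)^2 * (x powr (- \<alpha> - 2) * (x powr (- \<alpha> - 1))^2)"
          unfolding W1_def W2_def x_def[symmetric] by (simp only: power_mult_distrib mult_ac)
        also have "\<dots> = \<alpha>^3 * (\<alpha> + 1) * A^3 * x powr (- \<alpha> * lam)" unfolding E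
          by (simp only: power2_eq_square power3_eq_cube mult_ac)
        finally show ?thesis .
      qed
      have "W r powr lam = A powr lam * x powr (- \<alpha> * lam)"
        unfolding W_def x_def[symmetric] by (rule powr_prod_pow[OF xp Ap])
      also have "A powr lam = A^3 * A powr (lam - 3)" by (rule powr_split3[OF Ap])
      finally have R: "W r powr lam = A^3 * A powr (lam - 3) * x powr (- \<alpha> * lam)" .
      define X where "X = x powr (- \<alpha> * lam)"
      have X0: "A^3 * X \<ge> 0" unfolding X_def using Ap by simp
      have c1: "(\<alpha>^3 * (\<alpha> + 1)) * (A^3 * X) \<le> (c T * A powr (lam - 3)) * (A^3 * X)"
        using coef X0 by (rule mult_right_mono)
      have "c T \<le> c r" using cmono' rp r bT by simp
      hence "c T * A powr (lam - 3) \<le> c r * A powr (lam - 3)" by (rule mult_right_mono) simp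
      hence c2: "(c T * A powr (lam - 3)) * (A^3 * X) \<le> (c r * A powr (lam - 3)) * (A^3 * X)"
        using X0 by (rule mult_right_mono)
      have e1: "W2 r * (W1 r)^2 = (\<alpha>^3 * (\<alpha> + 1)) * (A^3 * X)" unfolding L X_def by (simp only: mult_ac)
      have e2: "c r * W r powr lam = (c r * A powr (lam - 3)) * (A^3 * X)" unfolding R X_def by (simp only: mult_ac)
      show "W2 r * (W1 r)^2 \<le> c r * W r powr lam" unfolding e1 e2 using c1 c2 by (rule order_trans)
    qed
    show "W a0 = Mf a0"
    proof -
      have "T - a0 = D" unfolding T_def by simp
      hence "W a0 = am * (D powr \<alpha> * D powr (- \<alpha>))" unfolding W_def A_def by simp
      also have "D powr \<alpha> * D powr (- \<alpha>) = 1" using Dp by (simp add: powr_minus)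
      finally show ?thesis unfolding am_def m_def a0_def by simp
    qed
    show "Mf b \<le> W b"
    proof -
      have "Mf b < Mf T" using Mf_strict[OF _ bT] rho_ge[of "Suc j"] a0b unfolding a0_def by simp
      thus ?thesis using Wb unfolding MT_def by simp
    qed
    show "(W has_real_derivative sg / 2) (at a0)"
    proof -
      have "a0 < T" unfolding T_def using Dp by simp
      moreover have "W1 a0 = sg / 2"
      proof -
        have "T - a0 = D" unfolding T_def by simp
        hence "W1 a0 = \<alpha> * am * (D powr \<alpha> * D powr (- \<alpha> - 1))" unfolding W1_def A_def by simp
        also have "D powr \<alpha> * D powr (- \<alpha> - 1) = 1 / D" using Dp
          by (simp add: powr_add[symmetric] powr_minus_divide)
        finally show ?thesis unfolding D_def using ap amp sgp by (simp add: field_simps)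
      qed
      ultimately show ?thesis using dW[of a0] by (metis (no_types))
    qed
    show "sg / 2 < sg" using sgp by simp
    show "\<forall>r. a0 < r \<longrightarrow> Mf r \<ge> Mf a0 + sg * (r - a0)"
      using line[of j] unfolding a0_def sg_def m_def by simp
  qed
qed

end

lemma powr_chord:
  fixes p x :: real
  assumes p: "p > 0" and x: "0 \<le> x" "x \<le> 1"
  shows "(1 + x) powr (- p) \<le> 1 - p * 2 powr (- p - 1) * x"
proof (cases "x = 0")
  case True thus ?thesis by simp
next
  case False
  hence xp: "0 < x" using x by simp
  have der: "DERIV (\<lambda>t. (1 + t) powr (- p)) t :> (- p) * (1 + t) powr (- p - 1)" if "0 \<le> t" for t
  proof -
    have "DERIV (\<lambda>t. (1 + t) powr (- p)) t :> (- p) * (1 + t) powr (- p - of_nat 1) * 1"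
      using that by (intro DERIV_fun_powr) (auto intro!: derivative_eq_intros)
    thus ?thesis by simp
  qed
  obtain z where z: "0 < z" "z < x" "(1 + x) powr (- p) - (1 + 0) powr (- p) = (x - 0) * ((- p) * (1 + z) powr (- p - 1))"
    using MVT2[OF xp, of "\<lambda>t. (1 + t) powr (- p)" "\<lambda>t. (- p) * (1 + t) powr (- p - 1)"] der by force
  have "2 powr (- p - 1) \<le> (1 + z) powr (- p - 1)" using z x p by (intro powr_mono2') auto
  hence "p * 2 powr (- p - 1) * x \<le> p * (1 + z) powr (- p - 1) * x" using p xp
    by (intro mult_right_mono mult_left_mono) auto
  thus ?thesis using z(3) by (simp add: algebra_simps)
qed

context sol1 begin

definition g :: "nat \<Rightarrow> real" where "g j = c (\<kappa> * \<rho> j) * \<rho> j powr (lam + 1)"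

lemma g_nonneg: "g j \<ge> 0"
proof -
  have "\<kappa> * \<rho> j > 0" using kappa_ge rho_pos[of j] by simp
  thus ?thesis unfolding g_def using cpos by (simp add: less_imp_le)
qed

lemma rho_mono: "i \<le> j \<Longrightarrow> \<rho> i \<le> \<rho> j"
  unfolding \<rho>_def using R1 by (simp add: power_increasing)

lemma final_contra: assumes "\<not> summable g" shows False
proof -
  have s0: "\<sigma> 0 > 0" by (rule sigma_pos)
  obtain J where J: "m 0 / (\<sigma> 0 * R1) < 2^J" using real_arch_pow[of "2::real"] by auto
  have big: "\<sigma> j * \<rho> j \<ge> m 0" if "J \<le> j" for j
  proof -
    have "m 0 < \<sigma> 0 * R1 * 2^J" using J s0 R1 by (simp add: field_simps)
    also have "\<dots> = \<sigma> 0 * \<rho> J" unfolding \<rho>_def by simp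
    also have "\<dots> \<le> \<sigma> j * \<rho> j" using sigma_mono'[of 0 j] rho_mono[OF that] s0 rho_pos[of J]
      by (intro mult_mono) auto
    finally show ?thesis by simp
  qed
  define p where "p = lam - 3"
  have pp: "p > 0" unfolding p_def using lam by simp
  define C1 where "C1 = (\<alpha> + 1) / (16 * \<alpha>)"
  have C1p: "C1 > 0" unfolding C1_def using alpha_pos by simp
  define C3 where "C3 = 9 + C1"
  have C3p: "C3 > 0" "C3 \<ge> 9" "C3 \<ge> C1" unfolding C3_def using C1p by auto
  define \<nu> where "\<nu> = p * 2 powr (- p - 1)"
  have nup: "\<nu> > 0" unfolding \<nu>_def using pp by simp
  define P where "P j = \<sigma> j powr (- p)" for j
  have step: "\<nu> * g j / C3 \<le> P j - P (Suc j)" if "J \<le> j" for j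
  proof -
    define y where "y = \<sigma> j powr p"
    define gy where "gy = g j * y"
    have gy0: "gy \<ge> 0" unfolding gy_def y_def using g_nonneg by simp
    have gy1: "gy < C1" using nolaunch[OF big[OF that]] unfolding gy_def y_def g_def C1_def p_def
      by (simp add: mult.assoc)
    define xj where "xj = min 1 (gy / 9)"
    have xj01: "0 \<le> xj" "xj \<le> 1" unfolding xj_def using gy0 by auto
    have xth: "xj \<le> \<theta> j"
    proof -
      have "\<rho> (Suc (Suc j)) = 4 * \<rho> j" using rho_Suc[of "Suc j"] rho_Suc[of j] by simp
      also have "\<dots> \<le> \<kappa> * \<rho> j" using kappa_ge rho_pos[of j] by (intro mult_right_mono) auto
      finally have "c (\<kappa> * \<rho> j) \<le> c (\<rho> (Suc (Suc j)))" using cmono' rho_pos by blast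
      hence "gy / 9 \<le> c (\<rho> (Suc (Suc j))) * \<rho> j powr (lam + 1) * \<sigma> j powr (lam - 3) / 9"
        unfolding gy_def g_def y_def p_def by (intro divide_right_mono mult_right_mono) auto
      thus ?thesis unfolding xj_def \<theta>_def by auto
    qed
    have sj: "\<sigma> j > 0" by (rule sigma_pos)
    have gr: "\<sigma> (Suc j) \<ge> \<sigma> j * (1 + xj)"
      using growth[of j] xth sj by (smt (verit) mult_left_mono)
    have "P (Suc j) \<le> (\<sigma> j * (1 + xj)) powr (- p)" unfolding P_def
      using gr sj xj01 pp by (intro powr_mono2') auto
    also have "\<dots> = P j * (1 + xj) powr (- p)" unfolding P_def using sj xj01 by (simp add: powr_mult)
    also have "\<dots> \<le> P j * (1 - \<nu> * xj)" unfolding \<nu>_def P_def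
      using powr_chord[OF pp xj01] by (intro mult_left_mono) auto
    finally have A: "P j - P (Suc j) \<ge> \<nu> * (P j * xj)" by (simp add: algebra_simps)
    have xg: "xj \<ge> gy / C3"
    proof (cases "gy / 9 \<le> 1")
      case True
      hence "xj = gy / 9" unfolding xj_def by simp
      moreover have "gy / C3 \<le> gy / 9" by (rule divide_left_mono) (use gy0 C3p in auto)
      ultimately show ?thesis by (simp only:)
    next
      case False
      hence "xj = 1" unfolding xj_def by simp
      moreover have "gy / C3 \<le> 1" using gy1 C3p by simp
      ultimately show ?thesis by simp
    qed
    have Pgy: "P j * gy = g j"
    proof -
      have "\<sigma> j powr (- p) * \<sigma> j powr p = \<sigma> j powr (- p + p)" by (rule powr_add[symmetric])
      hence "\<sigma> j powr (- p) * \<sigma> j powr p = 1" using sj by simp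
      thus ?thesis unfolding P_def gy_def y_def by (simp add: algebra_simps)
    qed
    have P0: "P j \<ge> 0" unfolding P_def by simp
    have "\<nu> * g j / C3 = \<nu> * (P j * (gy / C3))" using Pgy by (simp add: algebra_simps)
    also have "\<dots> \<le> \<nu> * (P j * xj)" using xg P0 nup by (intro mult_left_mono) auto
    finally show ?thesis using A by simp
  qed
  have sums: "\<nu> / C3 * (\<Sum>i<N. g (i + J)) \<le> P J - P (N + J)" for N
  proof (induction N)
    case 0 thus ?case by simp
  next
    case (Suc N)
    have "\<nu> / C3 * (\<Sum>i<Suc N. g (i + J)) = \<nu> / C3 * (\<Sum>i<N. g (i + J)) + \<nu> * g (N + J) / C3"
      by (simp add: algebra_simps)
    also have "\<dots> \<le> (P J - P (N + J)) + (P (N + J) - P (Suc (N + J)))"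
      using Suc step[of "N + J"] by (intro add_mono) auto
    finally show ?case by simp
  qed
  have "summable (\<lambda>i. g (i + J))"
  proof (rule summableI_nonneg_bounded[where x = "C3 / \<nu> * P J"])
    show "\<And>n. 0 \<le> g (n + J)" by (rule g_nonneg)
    fix n
    have "P (n + J) \<ge> 0" unfolding P_def by simp
    hence "\<nu> / C3 * (\<Sum>i<n. g (i + J)) \<le> P J" using sums[of n] by linarith
    thus "(\<Sum>i<n. g (i + J)) \<le> C3 / \<nu> * P J" using nup C3p by (simp add: field_simps)
  qed
  hence "summable g" by simp
  thus False using assms by simp
qed

end

lemma exists_dyadic:
  fixes t :: real assumes "t \<ge> 1"
  shows "\<exists>j::nat. 2^j \<le> t \<and> t < 2^(Suc j)"
proof -
  obtain n :: nat where n: "t < 2^n" using real_arch_pow[of 2 t] by auto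
  define n0 where "n0 = (LEAST n::nat. t < 2^n)"
  have n0: "t < 2^n0" unfolding n0_def using n by (rule LeastI)
  have n0pos: "n0 \<noteq> 0" using n0 assms by (intro notI) simp
  then obtain j where j: "n0 = Suc j" by (cases n0) auto
  have "\<not> t < 2^j" using not_less_Least[of j "\<lambda>n. t < (2::real)^n"] j unfolding n0_def by simp
  thus ?thesis using n0 j by (intro exI[of _ j]) auto
qed

lemma integral_finite:
  fixes c :: "real \<Rightarrow> real" and lam r0 \<tau>0 :: real
  assumes r0: "r0 > 0" "r0 \<le> \<tau>0" and cpos: "\<forall>r>0. c r > 0"
    and cmono: "\<forall>r s. 0 < r \<and> r \<le> s \<longrightarrow> c s \<le> c r" and lam: "lam \<ge> 0"
    and sm: "summable (\<lambda>j. c (\<tau>0 * 2^j) * (\<tau>0 * 2^j) powr (lam + 1))"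
  shows "(\<integral>\<^sup>+ r\<in>{r0..}. ennreal (r powr lam * c r) \<partial>lborel) \<noteq> \<infinity>"
proof -
  define \<tau> where "\<tau> j = \<tau>0 * 2^j" for j :: nat
  have tpos: "\<tau> j > 0" for j unfolding \<tau>_def using r0 by simp
  have tSuc: "\<tau> (Suc j) = 2 * \<tau> j" for j unfolding \<tau>_def by simp
  define B0 where "B0 = \<tau>0 powr lam * c r0"
  define b where "b j = \<tau> (Suc j) powr lam * c (\<tau> j)" for j
  have b0: "b j \<ge> 0" for j unfolding b_def using cpos tpos by (simp add: less_imp_le)
  have B00: "B0 \<ge> 0" unfolding B0_def using cpos r0 by (simp add: less_imp_le)
  define F where "F r = ennreal B0 * indicator {r0..\<tau>0} r + (\<Sum>j. ennreal (b j) * indicator {\<tau> j..<\<tau> (Suc j)} r)" for r :: real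
  have pw: "ennreal (r powr lam * c r) * indicator {r0..} r \<le> F r" for r
  proof (cases "r0 \<le> r")
    case False thus ?thesis by (simp add: indicator_def)
  next
    case True
    hence rp: "r > 0" using r0 by simp
    show ?thesis
    proof (cases "r \<le> \<tau>0")
      case True
      have "r powr lam * c r \<le> B0" unfolding B0_def
        using \<open>r0 \<le> r\<close> True rp lam cmono r0 cpos
        by (intro mult_mono powr_mono2) (auto simp: less_imp_le)
      hence "ennreal (r powr lam * c r) * indicator {r0..} r \<le> ennreal B0 * indicator {r0..\<tau>0} r"
        using \<open>r0 \<le> r\<close> True by (simp add: indicator_def ennreal_leI)
      also have "\<dots> \<le> F r" unfolding F_def by simp
      finally show ?thesis .
    next
      case False
      hence "r / \<tau>0 \<ge> 1" using r0 by simp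
      then obtain j where j: "2^j \<le> r / \<tau>0" "r / \<tau>0 < 2^(Suc j)" using exists_dyadic by blast
      have rj: "\<tau> j \<le> r" "r < \<tau> (Suc j)" using j r0 unfolding \<tau>_def by (auto simp: field_simps)
      have "r powr lam * c r \<le> b j" unfolding b_def
        using rj rp lam cmono tpos cpos
        by (intro mult_mono powr_mono2) (auto simp: less_imp_le)
      hence "ennreal (r powr lam * c r) * indicator {r0..} r \<le> ennreal (b j) * indicator {\<tau> j..<\<tau> (Suc j)} r"
        using \<open>r0 \<le> r\<close> rj by (simp add: indicator_def ennreal_leI)
      also have "\<dots> \<le> (\<Sum>j. ennreal (b j) * indicator {\<tau> j..<\<tau> (Suc j)} r)"
      proof -
        define h where "h = (\<lambda>j. ennreal (b j) * indicator {\<tau> j..<\<tau> (Suc j)} r)"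
        have "sum h {j} \<le> suminf h" by (rule sum_le_suminf) (auto intro: summableI)
        hence "h j \<le> suminf h" by (simp only: sum.insert_if finite.emptyI sum.empty empty_iff if_False add_0_right)
        thus ?thesis unfolding h_def .
      qed
      also have "\<dots> \<le> F r" unfolding F_def by simp
      finally show ?thesis .
    qed
  qed
  have "(\<integral>\<^sup>+ r\<in>{r0..}. ennreal (r powr lam * c r) \<partial>lborel) \<le> (\<integral>\<^sup>+ r. F r \<partial>lborel)"
    by (rule nn_integral_mono) (use pw in auto)
  also have "(\<integral>\<^sup>+ r. F r \<partial>lborel) = ennreal B0 * emeasure lborel {r0..\<tau>0}
      + (\<Sum>j. ennreal (b j) * emeasure lborel {\<tau> j..<\<tau> (Suc j)})"
    unfolding F_def
    by (subst nn_integral_add) (auto simp: nn_integral_suminf nn_integral_cmult_indicator)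
  also have "\<dots> = ennreal (B0 * (\<tau>0 - r0)) + (\<Sum>j. ennreal (2 powr lam * (c (\<tau> j) * \<tau> j powr (lam + 1))))"
  proof -
    have "ennreal (b j) * emeasure lborel {\<tau> j..<\<tau> (Suc j)} = ennreal (2 powr lam * (c (\<tau> j) * \<tau> j powr (lam + 1)))" for j
    proof -
      have "emeasure lborel {\<tau> j..<\<tau> (Suc j)} = ennreal (\<tau> j)" using tSuc[of j] tpos[of j] by simp
      moreover have "b j * \<tau> j = 2 powr lam * (c (\<tau> j) * \<tau> j powr (lam + 1))"
      proof -
        have "\<tau> (Suc j) powr lam = 2 powr lam * \<tau> j powr lam" using tSuc[of j] tpos[of j] by (simp add: powr_mult)
        moreover have "\<tau> j powr (lam + 1) = \<tau> j powr lam * \<tau> j" using tpos[of j] by (simp add: powr_add)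
        ultimately show ?thesis unfolding b_def by (simp add: algebra_simps)
      qed
      ultimately show ?thesis using b0[of j] tpos[of j] by (simp add: ennreal_mult[symmetric])
    qed
    moreover have "emeasure lborel {r0..\<tau>0} = ennreal (\<tau>0 - r0)" using r0 by simp
    ultimately show ?thesis using B00 r0 by (simp add: ennreal_mult[symmetric])
  qed
  also have "(\<Sum>j. ennreal (2 powr lam * (c (\<tau> j) * \<tau> j powr (lam + 1))))
      = ennreal (\<Sum>j. 2 powr lam * (c (\<tau> j) * \<tau> j powr (lam + 1)))"
  proof (rule suminf_ennreal2)
    show "0 \<le> 2 powr lam * (c (\<tau> j) * \<tau> j powr (lam + 1))" for j using cpos tpos[of j] by (simp add: less_imp_le)
    show "summable (\<lambda>j. 2 powr lam * (c (\<tau> j) * \<tau> j powr (lam + 1)))"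
      using sm unfolding \<tau>_def by (intro summable_mult)
  qed
  finally show ?thesis by (auto simp: top_unique)
qed

theorem corollary1:
  fixes \<Omega> :: "(real^'n) set" and c :: "real \<Rightarrow> real" and lam r0 :: real
    and u :: "real^'n \<Rightarrow> real"
  assumes "CARD('n) \<ge> 2"
    and "open \<Omega>" and "connected \<Omega>" and "\<not> bounded \<Omega>"
    and "r0 > 0"
    and "\<forall>r>r0. sphere 0 r \<inter> \<Omega> \<noteq> {}"
    and "\<forall>r>0. c r > 0"
    and "\<forall>r s. 0 < r \<and> r \<le> s \<longrightarrow> c s \<le> c r"
    and "lam > 3"
    and "(\<integral>\<^sup>+ r\<in>{r0..}. ennreal (r powr lam * c r) \<partial>lborel) = \<infinity>"
    and "nonneg_solution \<Omega> c lam u"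
  shows "\<forall>x\<in>closure \<Omega>. u x = 0"
proof (rule ccontr)
  assume "\<not> (\<forall>x\<in>closure \<Omega>. u x = 0)"
  then obtain x0 where x0c: "x0 \<in> closure \<Omega>" and x0ne: "u x0 \<noteq> 0" by blast
  have "u x0 \<ge> 0" using assms(11) x0c unfolding nonneg_solution_def by blast
  hence x0p: "u x0 > 0" using x0ne by simp
  define R1 where "R1 = max (norm x0) r0 + 1"
  interpret S: sol1 \<Omega> c lam u x0 R1
    by unfold_locales (use assms x0c x0p in \<open>auto simp: R1_def\<close>)
  have "\<not> summable S.g"
  proof
    assume sg: "summable S.g"
    define \<tau>0 where "\<tau>0 = S.\<kappa> * R1"
    have kp: "S.\<kappa> \<ge> 4" by (rule S.kappa_ge)
    have R1r: "R1 \<ge> r0" "R1 > 0" unfolding R1_def using assms(5) by auto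
    have "1 * R1 \<le> S.\<kappa> * R1" using kp R1r by (intro mult_right_mono) auto
    hence t0: "r0 \<le> \<tau>0" unfolding \<tau>0_def using R1r by linarith
    have eq: "c (\<tau>0 * 2^j) * (\<tau>0 * 2^j) powr (lam + 1) = S.\<kappa> powr (lam + 1) * S.g j" for j
    proof -
      have "\<tau>0 * 2^j = S.\<kappa> * S.\<rho> j" unfolding \<tau>0_def S.\<rho>_def by simp
      moreover have "(S.\<kappa> * S.\<rho> j) powr (lam + 1) = S.\<kappa> powr (lam + 1) * S.\<rho> j powr (lam + 1)"
        using kp S.rho_pos[of j] by (simp add: powr_mult)
      ultimately show ?thesis unfolding S.g_def by simp
    qed
    have "summable (\<lambda>j. c (\<tau>0 * 2^j) * (\<tau>0 * 2^j) powr (lam + 1))"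
      unfolding eq using sg by (rule summable_mult)
    hence "(\<integral>\<^sup>+ r\<in>{r0..}. ennreal (r powr lam * c r) \<partial>lborel) \<noteq> \<infinity>"
      using integral_finite[of r0 \<tau>0 c lam] assms(5,7,8,9) t0 by simp
    thus False using assms(10) by simp
  qed
  thus False by (rule S.final_contra)
qed

end
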